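(* Let $m,n>-1/2$, $\alpha_1,\alpha_2>0$, $0\le|\beta_i|<\alpha_i$ ($i=1,2$), let $X\sim\mathrm{VG}(m,\alpha_1,\beta_1,0)$, $Y\sim\mathrm{VG}(n,\alpha_2,\beta_2,0)$ be independent, $Z=XY$, and let $Q(p)=F_Z^{-1}(p)$, $0<p<1$, be the quantile function of $Z$. Let $\xi_1=\min\{\lambda_1^-\lambda_2^-,\lambda_1^+\lambda_2^+\}$ and $\xi_2=\min\{\lambda_1^-\lambda_2^+,\lambda_1^+\lambda_2^-\}$. Then \[ Q(p)\sim\frac{1}{4\xi_1}(\ln(1-p))^2\ \ (p\to1),\qquad Q(p)\sim-\frac{1}{4\xi_2}(\ln p)^2\ \ (p\to0). \]
   Context: For $\mu>-1/2$, $\alpha>0$ and $0\le|\beta|<\alpha$, $\mathrm{VG}(\mu,\alpha,\beta,0)$ denotes the variance-gamma distribution on $\mathbb{R}$ with probability density function $f(x)=\frac{(\alpha^2-\beta^2)^{\mu+1/2}}{\sqrt{\pi}(2\alpha)^{\mu}\Gamma(\mu+1/2)}e^{\beta x}|x|^{\mu}K_{\mu}(\alpha|x|)$, where $K_\nu$ is the modified Bessel function of the second kind. Notation: $\lambda_i^{\pm}=\alpha_i\pm\beta_i$; $F_Z(z)=\mathbb{P}(Z\le z)$ (continuous and strictly increasing, so $F_Z^{-1}$ is its inverse). $a\sim b$ means $a/b\to1$. *)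

theory Defs
  imports "HOL-Probability.Probability" "HOL-Library.Landau_Symbols"
begin

definition bessel_K :: "real \<Rightarrow> real \<Rightarrow> real" where
  "bessel_K \<nu> x = (LBINT t:{0<..}. exp (- x * cosh t) * cosh (\<nu> * t))"

definition vg_pdf :: "real \<Rightarrow> real \<Rightarrow> real \<Rightarrow> real \<Rightarrow> real" where
  "vg_pdf \<mu> \<alpha> \<beta> x =
     (\<alpha>\<^sup>2 - \<beta>\<^sup>2) powr (\<mu> + 1/2) / (sqrt pi * (2 * \<alpha>) powr \<mu> * Gamma (\<mu> + 1/2))
     * exp (\<beta> * x) * \<bar>x\<bar> powr \<mu> * bessel_K \<mu> (\<alpha> * \<bar>x\<bar>)"

text \<open>Quantile function: inverse of a (continuous, strictly increasing) CDF.\<close>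
definition quantile :: "(real \<Rightarrow> real) \<Rightarrow> real \<Rightarrow> real" where
  "quantile F p = (THE z. F z = p)"

end

theory Submission
  imports Defs "HOL-Real_Asymp.Real_Asymp"
begin


lemma cosh_le_exp_abs: "cosh (x::real) \<le> exp \<bar>x\<bar>"
proof (cases "x \<ge> 0")
  case True
  have "exp (-x) \<le> exp x" using True by simp
  then show ?thesis using True by (simp add: cosh_def)
next
  case False
  have "exp x \<le> exp (-x)" using False by simp
  then show ?thesis using False by (simp add: cosh_def)
qed

lemma cosh_ge_sq4: "(t::real) \<ge> 0 \<Longrightarrow> t\<^sup>2 / 4 \<le> cosh t"
proof -
  assume t: "t \<ge> 0"
  have a: "1 + t + t*t/2 \<le> exp t" using exp_lower_Taylor_quadratic[OF t] by (simp add: power2_eq_square)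
  have b: "2 * cosh t = exp t + exp (-t)" by (simp add: cosh_def)
  have c: "exp (-t) > 0" by simp
  have a': "2 + 2*t + t*t \<le> 2 * exp t" using a by simp
  have "t*t \<le> 4 * cosh t" using a' b c t by linarith
  then have "t*t/4 \<le> cosh t" by simp
  then show ?thesis by (simp add: power2_eq_square)
qed

lemma bK_bound:
  fixes y \<nu> t :: real
  assumes y: "y > 0" and t: "t \<ge> 0"
  defines "T \<equiv> 4 * (\<bar>\<nu>\<bar> + 1) / y"
  shows "exp (- y * cosh t) * cosh (\<nu> * t) \<le> exp (\<bar>\<nu>\<bar> * T) * indicator {..T} t + exp (- t)"
proof -
  have c: "cosh (\<nu> * t) \<le> exp (\<bar>\<nu>\<bar> * t)"
    using cosh_le_exp_abs[of "\<nu>*t"] t by (simp add: abs_mult)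
  have e0: "exp (- y * cosh t) \<le> 1" using y by simp
  show ?thesis
  proof (cases "t \<le> T")
    case True
    have "exp (- y * cosh t) * cosh (\<nu> * t) \<le> 1 * exp (\<bar>\<nu>\<bar> * t)"
      by (intro mult_mono e0 c) auto
    also have "\<dots> \<le> exp (\<bar>\<nu>\<bar> * T)" using True t by (simp add: mult_left_mono)
    finally have "exp (- y * cosh t) * cosh (\<nu> * t) \<le> exp (\<bar>\<nu>\<bar> * T)" .
    moreover have "exp (- t) > 0" by simp
    ultimately have "exp (- y * cosh t) * cosh (\<nu> * t) \<le> exp (\<bar>\<nu>\<bar> * T) + exp (- t)" by linarith
    then show ?thesis using True by (simp add: indicator_def)
  next
    case False
    hence tT: "t > T" by simp
    have "4 * (\<bar>\<nu>\<bar> + 1) < t * y" using tT y by (simp add: T_def pos_divide_less_eq)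
    hence "y * t / 4 \<ge> \<bar>\<nu>\<bar> + 1" by (simp add: algebra_simps)
    hence "(\<bar>\<nu>\<bar> + 1) * t \<le> (y * t / 4) * t" using t by (rule mult_right_mono)
    hence "y * (t\<^sup>2/4) \<ge> (\<bar>\<nu>\<bar> + 1) * t" by (simp add: power2_eq_square algebra_simps)
    moreover have "y * (t\<^sup>2/4) \<le> y * cosh t" using cosh_ge_sq4[OF t] y by simp
    ultimately have k: "\<bar>\<nu>\<bar> * t - y * cosh t \<le> - t" by (simp add: algebra_simps)
    have "exp (- y * cosh t) * cosh (\<nu> * t) \<le> exp (- y * cosh t) * exp (\<bar>\<nu>\<bar> * t)"
      by (intro mult_left_mono c) auto
    also have "\<dots> = exp (\<bar>\<nu>\<bar> * t - y * cosh t)" by (simp add: exp_add[symmetric])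
    also have "\<dots> \<le> exp (-t)" using k by simp
    finally show ?thesis using tT by (simp add: indicator_def)
  qed
qed



lemma nn_integral_exp_Ici: "(\<integral>\<^sup>+ t. ennreal (exp (- t)) * indicator {0..} t \<partial>lborel) = 1"
  using nn_intergal_power_times_exp_Ici[of 0] by simp

lemma cosh_meas[measurable]: "(cosh :: real \<Rightarrow> real) \<in> borel_measurable borel"
  by (intro borel_measurable_continuous_onI continuous_intros)

lemma bK_integrand_meas[measurable]:
  "(\<lambda>t. exp (- y * cosh t) * cosh (\<nu> * t)) \<in> borel_measurable (borel :: real measure)"
  by (intro borel_measurable_continuous_onI continuous_intros)

lemma bK_integrable:
  fixes y \<nu> :: real
  assumes y: "y > 0"
  shows "set_integrable lborel {0<..} (\<lambda>t. exp (- y * cosh t) * cosh (\<nu> * t))"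
proof -
  define T where "T = 4 * (\<bar>\<nu>\<bar> + 1) / y"
  define A where "A = exp (\<bar>\<nu>\<bar> * T)"
  have T: "T \<ge> 0" using y by (simp add: T_def)
  have pt: "ennreal (norm (indicator {0<..} t *\<^sub>R (exp (- y * cosh t) * cosh (\<nu> * t))))
       \<le> ennreal A * indicator {0..T} t + ennreal (exp (- t)) * indicator {0..} t" for t
  proof (cases "t > 0")
    case True
    have "exp (- y * cosh t) * cosh (\<nu> * t) \<le> A * indicator {..T} t + exp (- t)"
      using bK_bound[OF y, of t \<nu>] True unfolding T_def A_def by simp
    then have "ennreal (exp (- y * cosh t) * cosh (\<nu> * t)) \<le> ennreal (A * indicator {..T} t + exp (- t))"
      by (rule ennreal_leI)
    also have "\<dots> = ennreal A * indicator {0..T} t + ennreal (exp (- t)) * indicator {0..} t"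
      using True by (cases "t \<le> T") (simp_all add: indicator_def A_def ennreal_plus)
    finally show ?thesis using True by simp
  qed (simp add: indicator_def)
  have "(\<integral>\<^sup>+ t. ennreal (norm (indicator {0<..} t *\<^sub>R (exp (- y * cosh t) * cosh (\<nu> * t)))) \<partial>lborel)
      \<le> (\<integral>\<^sup>+ t. ennreal A * indicator {0..T} t + ennreal (exp (- t)) * indicator {0..} t \<partial>lborel)"
    by (rule nn_integral_mono) (rule pt)
  also have "\<dots> = (\<integral>\<^sup>+ t. ennreal A * indicator {0..T} t \<partial>lborel) + (\<integral>\<^sup>+ t. ennreal (exp (- t)) * indicator {0..} t \<partial>lborel)"
    by (rule nn_integral_add) auto
  also have "\<dots> = ennreal A * T + 1"
    using T by (simp add: nn_integral_cmult_indicator nn_integral_exp_Ici)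
  also have "\<dots> < \<infinity>" by (simp add: ennreal_mult_less_top)
  finally have fin: "(\<integral>\<^sup>+ t. ennreal (norm (indicator {0<..} t *\<^sub>R (exp (- y * cosh t) * cosh (\<nu> * t)))) \<partial>lborel) < \<infinity>" .
  have meas: "(\<lambda>t. indicator {0<..} t *\<^sub>R (exp (- y * cosh t) * cosh (\<nu> * t))) \<in> borel_measurable lborel"
    by (intro borel_measurable_scaleR borel_measurable_indicator) (auto simp: measurable_lborel1)
  show ?thesis unfolding set_integrable_def
    by (rule integrableI_bounded[OF meas fin])
qed



lemma bK_upper:
  fixes \<nu> y :: real
  assumes y: "y \<ge> 1"
  shows "bessel_K \<nu> y \<le> exp (1 - y) * bessel_K \<nu> 1"
proof -
  have i1: "set_integrable lborel {0<..} (\<lambda>t. exp (- y * cosh t) * cosh (\<nu> * t))"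
    using y by (intro bK_integrable) simp
  have i2: "set_integrable lborel {0<..} (\<lambda>t. exp (1 - y) * (exp (- 1 * cosh t) * cosh (\<nu> * t)))"
    by (intro set_integrable_mult_right bK_integrable) simp
  have "bessel_K \<nu> y \<le> (LBINT t:{0<..}. exp (1 - y) * (exp (- 1 * cosh t) * cosh (\<nu> * t)))"
    unfolding bessel_K_def
  proof (rule set_integral_mono[OF i1 i2])
    fix t :: real
    have "- y * cosh t \<le> (1 - y) + - 1 * cosh t"
    proof -
      have "0 \<le> (y - 1) * (cosh t - 1)" using y cosh_real_ge_1[of t] by simp
      thus ?thesis by (simp add: algebra_simps)
    qed
    hence "exp (- y * cosh t) \<le> exp (1 - y) * exp (- 1 * cosh t)"
      by (simp add: exp_add[symmetric])
    thus "exp (- y * cosh t) * cosh (\<nu> * t) \<le> exp (1 - y) * (exp (- 1 * cosh t) * cosh (\<nu> * t))"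
      by (simp add: mult.assoc[symmetric] mult_right_mono)
  qed
  also have "\<dots> = exp (1 - y) * bessel_K \<nu> 1" unfolding bessel_K_def by simp
  finally show ?thesis .
qed

lemma bK_lower:
  fixes \<nu> y c :: real
  assumes y: "y > 0" and c: "c > 0"
  shows "c * exp (- y * cosh c) \<le> bessel_K \<nu> y"
proof -
  define k where "k = exp (- y * cosh c)"
  define h where "h t = (if t \<le> c then k else 0)" for t :: real
  have eq: "indicator {0<..} t *\<^sub>R h t = indicator {0<..c} t *\<^sub>R k" for t
    by (auto simp: h_def indicator_def)
  have ih: "set_integrable lborel {0<..} h"
    unfolding set_integrable_def eq
    using c by (intro integrable_scaleR_left integrable_real_indicator) auto
  have "c * k = (LBINT t:{0<..}. h t)"
    unfolding set_lebesgue_integral_def eq using c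
    by (simp add: measure_def)
  also have "\<dots> \<le> bessel_K \<nu> y"
    unfolding bessel_K_def
  proof (rule set_integral_mono[OF ih bK_integrable[OF y]])
    fix t :: real assume t: "t \<in> {0<..}"
    show "h t \<le> exp (- y * cosh t) * cosh (\<nu> * t)"
    proof (cases "t \<le> c")
      case True
      have "cosh t \<le> cosh c" using True t by (simp add: cosh_real_nonneg_le_iff)
      hence "k \<le> exp (- y * cosh t)" unfolding k_def using y by simp
      moreover have "1 \<le> cosh (\<nu> * t)" by (rule cosh_real_ge_1)
      ultimately have "k * 1 \<le> exp (- y * cosh t) * cosh (\<nu> * t)"
        by (intro mult_mono) (auto simp: k_def)
      thus ?thesis using True by (simp add: h_def)
    qed (simp add: h_def)
  qed
  finally show ?thesis by (simp add: k_def)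
qed

lemma bK_pos: "y > 0 \<Longrightarrow> bessel_K \<nu> y > 0"
  using bK_lower[of y 1 \<nu>] by (smt (verit) exp_gt_zero)



definition vgC :: "real \<Rightarrow> real \<Rightarrow> real \<Rightarrow> real" where
  "vgC \<mu> \<alpha> \<beta> = (\<alpha>\<^sup>2 - \<beta>\<^sup>2) powr (\<mu> + 1/2) / (sqrt pi * (2 * \<alpha>) powr \<mu> * Gamma (\<mu> + 1/2))"

lemma vgC_pos:
  assumes "\<mu> > -1/2" "\<alpha> > 0" "\<bar>\<beta>\<bar> < \<alpha>"
  shows "vgC \<mu> \<alpha> \<beta> > 0"
proof -
  have "\<bar>\<beta>\<bar>\<^sup>2 < \<alpha>\<^sup>2" using assms by (intro power_strict_mono) auto
  hence "\<beta>\<^sup>2 < \<alpha>\<^sup>2" by simp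
  hence "(\<alpha>\<^sup>2 - \<beta>\<^sup>2) powr (\<mu> + 1/2) > 0" by simp
  moreover have "Gamma (\<mu> + 1/2) > 0" using assms by (intro Gamma_real_pos) simp
  moreover have "(2 * \<alpha>) powr \<mu> > 0" using assms by simp
  ultimately show ?thesis unfolding vgC_def by simp
qed

lemma vg_pdf_pos_form:
  "x > 0 \<Longrightarrow> vg_pdf \<mu> \<alpha> \<beta> x = vgC \<mu> \<alpha> \<beta> * exp (\<beta> * x) * x powr \<mu> * bessel_K \<mu> (\<alpha> * x)"
  unfolding vg_pdf_def vgC_def by simp

lemma vg_pdf_neg: "vg_pdf \<mu> \<alpha> \<beta> (- x) = vg_pdf \<mu> \<alpha> (-\<beta>) x"
  unfolding vg_pdf_def by simp

lemma vg_upper: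
  assumes C: "vgC \<mu> \<alpha> \<beta> \<ge> 0" and \<alpha>: "\<alpha> > 0" and x1: "x \<ge> 1" and xa: "\<alpha> * x \<ge> 1"
  shows "vg_pdf \<mu> \<alpha> \<beta> x \<le> (vgC \<mu> \<alpha> \<beta> * exp 1 * bessel_K \<mu> 1) * x powr \<mu> * exp (- (\<alpha> - \<beta>) * x)"
proof -
  have "vg_pdf \<mu> \<alpha> \<beta> x = vgC \<mu> \<alpha> \<beta> * exp (\<beta> * x) * x powr \<mu> * bessel_K \<mu> (\<alpha> * x)"
    using x1 by (intro vg_pdf_pos_form) simp
  also have "\<dots> \<le> vgC \<mu> \<alpha> \<beta> * exp (\<beta> * x) * x powr \<mu> * (exp (1 - \<alpha> * x) * bessel_K \<mu> 1)"
    by (intro mult_left_mono bK_upper xa) (use C in simp)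
  also have "\<dots> = (vgC \<mu> \<alpha> \<beta> * exp 1 * bessel_K \<mu> 1) * x powr \<mu> * exp (- (\<alpha> - \<beta>) * x)"
  proof -
    have "exp (\<beta> * x) * exp (1 - \<alpha> * x) = exp 1 * exp (- (\<alpha> - \<beta>) * x)"
      unfolding exp_add[symmetric] by (simp add: algebra_simps)
    thus ?thesis by (metis (no_types, lifting) mult.commute mult.left_commute)
  qed
  finally show ?thesis .
qed

lemma vg_lower:
  assumes C: "vgC \<mu> \<alpha> \<beta> \<ge> 0" and \<alpha>: "\<alpha> > 0" and x: "x > 0" and c: "c > 0"
  shows "(vgC \<mu> \<alpha> \<beta> * c) * x powr \<mu> * exp (- (\<alpha> * cosh c - \<beta>) * x) \<le> vg_pdf \<mu> \<alpha> \<beta> x"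
proof -
  have "(vgC \<mu> \<alpha> \<beta> * c) * x powr \<mu> * exp (- (\<alpha> * cosh c - \<beta>) * x)
      = vgC \<mu> \<alpha> \<beta> * exp (\<beta> * x) * x powr \<mu> * (c * exp (- (\<alpha> * x) * cosh c))"
  proof -
    have "exp (- (\<alpha> * cosh c - \<beta>) * x) = exp (\<beta> * x) * exp (- (\<alpha> * x) * cosh c)"
      unfolding exp_add[symmetric] by (simp add: algebra_simps)
    thus ?thesis by (metis (no_types, lifting) mult.commute mult.left_commute)
  qed
  also have "\<dots> \<le> vgC \<mu> \<alpha> \<beta> * exp (\<beta> * x) * x powr \<mu> * bessel_K \<mu> (\<alpha> * x)"
    by (intro mult_left_mono bK_lower c) (use C \<alpha> x in simp_all)
  also have "\<dots> = vg_pdf \<mu> \<alpha> \<beta> x" using x by (simp add: vg_pdf_pos_form)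
  finally show ?thesis .
qed

lemma vg_pdf_pos:
  assumes "\<mu> > -1/2" "\<alpha> > 0" "\<bar>\<beta>\<bar> < \<alpha>" "x > 0"
  shows "vg_pdf \<mu> \<alpha> \<beta> x > 0"
  using assms vgC_pos[OF assms(1-3)] bK_pos[of "\<alpha> * x" \<mu>] by (simp add: vg_pdf_pos_form)

lemma powr_exp_bounds:
  fixes \<mu> \<delta> :: real
  assumes \<delta>: "\<delta> > 0"
  obtains E where "E > 0" "\<And>x. x \<ge> 1 \<Longrightarrow> x powr \<mu> \<le> E * exp (\<delta> * x)"
    "\<And>x. x \<ge> 1 \<Longrightarrow> exp (- \<delta> * x) \<le> E * x powr \<mu>"
proof -
  define m where "m = \<bar>\<mu>\<bar> + 1"
  define E where "E = exp (m * \<bar>ln (m / \<delta>)\<bar>)"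
  have m: "m > 0" by (simp add: m_def)
  have key: "\<bar>\<mu>\<bar> * ln x \<le> \<delta> * x + m * \<bar>ln (m / \<delta>)\<bar>" if x: "x \<ge> 1" for x
  proof -
    have "ln (\<delta> * x / m) \<le> \<delta> * x / m - 1" using x \<delta> m by (intro ln_le_minus_one) simp
    moreover have "ln (\<delta> * x / m) = ln x - ln (m / \<delta>)" using x \<delta> m
      by (simp add: ln_div ln_mult)
    ultimately have "ln x \<le> \<delta> * x / m + \<bar>ln (m / \<delta>)\<bar>" by linarith
    hence "m * ln x \<le> m * (\<delta> * x / m + \<bar>ln (m / \<delta>)\<bar>)" using m by (simp add: mult_left_mono)
    also have "\<dots> = \<delta> * x + m * \<bar>ln (m / \<delta>)\<bar>" using m by (simp add: field_simps)
    finally have "m * ln x \<le> \<delta> * x + m * \<bar>ln (m / \<delta>)\<bar>" .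
    moreover have "\<bar>\<mu>\<bar> * ln x \<le> m * ln x" using x by (intro mult_right_mono) (auto simp: m_def)
    ultimately show ?thesis by linarith
  qed
  show ?thesis
  proof (rule that)
    show "E > 0" by (simp add: E_def)
  next
    fix x :: real assume x: "x \<ge> 1"
    have "x powr \<mu> = exp (\<mu> * ln x)" using x by (simp add: powr_def)
    also have "\<dots> \<le> exp (\<delta> * x + m * \<bar>ln (m / \<delta>)\<bar>)"
    proof -
      have "\<mu> * ln x \<le> \<bar>\<mu>\<bar> * ln x" using x by (intro mult_right_mono) auto
      thus ?thesis using key[OF x] by simp
    qed
    also have "\<dots> = E * exp (\<delta> * x)" by (simp add: E_def exp_add)
    finally show "x powr \<mu> \<le> E * exp (\<delta> * x)" .
  next
    fix x :: real assume x: "x \<ge> 1"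
    have "exp (- \<delta> * x) = exp (m * \<bar>ln (m / \<delta>)\<bar>) * exp (- (\<delta> * x + m * \<bar>ln (m / \<delta>)\<bar>))"
      by (simp add: exp_add[symmetric])
    also have "\<dots> \<le> E * exp (\<mu> * ln x)"
      unfolding E_def
    proof (intro mult_left_mono)
      have "- \<bar>\<mu>\<bar> * ln x \<le> \<mu> * ln x" using x by (intro mult_right_mono) auto
      thus "exp (- (\<delta> * x + m * \<bar>ln (m / \<delta>)\<bar>)) \<le> exp (\<mu> * ln x)" using key[OF x] by simp
    qed simp
    also have "\<dots> = E * x powr \<mu>" using x by (simp add: powr_def)
    finally show "exp (- \<delta> * x) \<le> E * x powr \<mu>" .
  qed
qed



lemma nn_integral_exp_atLeast:
  fixes c R :: real
  assumes c: "c > 0"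
  shows "(\<integral>\<^sup>+x. ennreal (exp (- c * x)) * indicator {R..} x \<partial>lborel) = ennreal (exp (- c * R) / c)"
proof -
  have "(\<integral>\<^sup>+x. ennreal (exp (- c * x)) * indicator {R..} x \<partial>lborel) = 0 - (- exp (- c * R) / c)"
  proof (rule nn_integral_FTC_atLeast)
    show "(\<lambda>x. exp (- c * x)) \<in> borel_measurable borel" by measurable
    fix x :: real
    show "DERIV (\<lambda>x. - exp (- c * x) / c) x :> exp (- c * x)"
      using c by (auto intro!: derivative_eq_intros simp: field_simps)
    show "0 \<le> exp (- c * x)" by simp
  next
    show "((\<lambda>x. - exp (- c * x) / c) \<longlongrightarrow> 0) at_top" using c by real_asymp
  qed
  then show ?thesis by simp
qed

lemma vg_pdf_nonneg:
  assumes "\<mu> > -1/2" "\<alpha> > 0" "\<bar>\<beta>\<bar> < \<alpha>"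
  shows "vg_pdf \<mu> \<alpha> \<beta> x \<ge> 0"
proof (cases "x = 0")
  case True then show ?thesis by (simp add: vg_pdf_def)
next
  case False
  have "vgC \<mu> \<alpha> \<beta> > 0" using vgC_pos[OF assms] .
  moreover have "bessel_K \<mu> (\<alpha> * \<bar>x\<bar>) > 0" using False assms by (intro bK_pos) simp
  ultimately show ?thesis unfolding vg_pdf_def vgC_def[symmetric]
    by (smt (verit) exp_gt_zero mult_pos_pos powr_gt_zero vgC_def zero_less_abs_iff False)
qed



definition nice :: "'a measure \<Rightarrow> ('a \<Rightarrow> real) \<Rightarrow> real \<Rightarrow> bool" where
  "nice M U l \<longleftrightarrow> l > 0 \<and>
     (\<forall>a. 0 < a \<and> a < l \<longrightarrow> (\<integral>\<^sup>+\<omega>. ennreal (exp (a * max (U \<omega>) 0)) \<partial>M) \<noteq> \<infinity>) \<and>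
     (\<forall>a>l. \<forall>\<^sub>F x in at_top. exp (- a * x) \<le> measure M {\<omega> \<in> space M. x < U \<omega>}) \<and>
     (\<forall>a b. 0 < a \<and> a < b \<longrightarrow> 0 < measure M {\<omega> \<in> space M. a < U \<omega> \<and> U \<omega> < b})"

context prob_space
begin

lemma vg_N1:
  assumes D: "distributed M lborel X (\<lambda>x. ennreal (vg_pdf \<mu> \<alpha> \<beta> x))"
    and p: "\<mu> > -1/2" "\<alpha> > 0" "\<bar>\<beta>\<bar> < \<alpha>"
    and a: "0 < a" "a < \<alpha> - \<beta>"
  shows "(\<integral>\<^sup>+\<omega>. ennreal (exp (a * max (X \<omega>) 0)) \<partial>M) \<noteq> \<infinity>"
proof -
  define f where "f x = vg_pdf \<mu> \<alpha> \<beta> x" for x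
  have fnn: "f x \<ge> 0" for x unfolding f_def using vg_pdf_nonneg[OF p] .
  have fm[measurable]: "f \<in> borel_measurable borel"
    using distributed_real_measurable[OF _ D] fnn unfolding f_def by auto
  define \<delta> where "\<delta> = (\<alpha> - \<beta> - a) / 2"
  have \<delta>: "\<delta> > 0" using a by (simp add: \<delta>_def)
  obtain E where E: "E > 0" "\<And>x. x \<ge> 1 \<Longrightarrow> x powr \<mu> \<le> E * exp (\<delta> * x)"
    using powr_exp_bounds[OF \<delta>, of \<mu>] by blast
  define R where "R = max 1 (1 / \<alpha>)"
  define Dc where "Dc = vgC \<mu> \<alpha> \<beta> * exp 1 * bessel_K \<mu> 1"
  have C: "vgC \<mu> \<alpha> \<beta> > 0" using vgC_pos[OF p] .
  have Dc: "Dc \<ge> 0" using C bK_pos[of 1 \<mu>] by (simp add: Dc_def)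
  have R1: "R \<ge> 1" by (simp add: R_def)
  have pt: "f x * exp (a * max x 0) \<le> exp (a * R) * f x + (Dc * E) * (exp (- \<delta> * x) * indicator {R..} x)" for x
  proof (cases "x \<le> R")
    case True
    have "exp (a * max x 0) \<le> exp (a * R)" using True R1 a by (simp add: mult_left_mono)
    hence "f x * exp (a * max x 0) \<le> exp (a * R) * f x" using fnn[of x] by (simp add: mult.commute mult_left_mono)
    moreover have "0 \<le> (Dc * E) * (exp (- \<delta> * x) * indicator {R..} x)" using Dc E by simp
    ultimately show ?thesis by linarith
  next
    case False
    hence x1: "x \<ge> 1" using R1 by simp
    have "1 / \<alpha> < x" using False by (simp add: R_def)
    hence "1 < x * \<alpha>" using p(2) by (simp add: pos_divide_less_eq)
    hence xa: "\<alpha> * x \<ge> 1" by (simp add: mult.commute)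
    have "f x \<le> Dc * x powr \<mu> * exp (- (\<alpha> - \<beta>) * x)"
      unfolding f_def Dc_def using vg_upper[OF _ p(2) x1 xa] C by simp
    also have "\<dots> \<le> Dc * (E * exp (\<delta> * x)) * exp (- (\<alpha> - \<beta>) * x)"
      using E(2)[OF x1] Dc by (intro mult_right_mono mult_left_mono) auto
    finally have fx: "f x \<le> Dc * (E * exp (\<delta> * x)) * exp (- (\<alpha> - \<beta>) * x)" .
    have "f x * exp (a * max x 0) = f x * exp (a * x)" using x1 by simp
    also have "\<dots> \<le> Dc * (E * exp (\<delta> * x)) * exp (- (\<alpha> - \<beta>) * x) * exp (a * x)"
      using fx by (rule mult_right_mono) simp
    finally have "f x * exp (a * max x 0) \<le> Dc * (E * exp (\<delta> * x)) * exp (- (\<alpha> - \<beta>) * x) * exp (a * x)" .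
    also have "\<dots> = (Dc * E) * exp (- \<delta> * x)"
    proof -
      have "exp (\<delta> * x) * exp (- (\<alpha> - \<beta>) * x) * exp (a * x) = exp (- \<delta> * x)"
        unfolding exp_add[symmetric] by (simp add: \<delta>_def algebra_simps)
      thus ?thesis by (metis (no_types, lifting) mult.assoc)
    qed
    finally have h: "f x * exp (a * max x 0) \<le> (Dc * E) * exp (- \<delta> * x)" .
    have "0 \<le> exp (a * R) * f x" using fnn[of x] by simp
    moreover have "indicator {R..} x = (1::real)" using False by simp
    ultimately show ?thesis using h by simp
  qed
  have "(\<integral>\<^sup>+\<omega>. ennreal (exp (a * max (X \<omega>) 0)) \<partial>M) = (\<integral>\<^sup>+x. ennreal (f x) * ennreal (exp (a * max x 0)) \<partial>lborel)"
    using distributed_nn_integral[OF D, of "\<lambda>x. ennreal (exp (a * max x 0))"] unfolding f_def by simp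
  also have "\<dots> \<le> (\<integral>\<^sup>+x. ennreal (exp (a * R)) * ennreal (f x) + ennreal (Dc * E) * (ennreal (exp (- \<delta> * x)) * indicator {R..} x) \<partial>lborel)"
  proof (rule nn_integral_mono)
    fix x
    have "ennreal (f x) * ennreal (exp (a * max x 0)) = ennreal (f x * exp (a * max x 0))"
      using fnn[of x] by (simp add: ennreal_mult)
    also have "\<dots> \<le> ennreal (exp (a * R) * f x + (Dc * E) * (exp (- \<delta> * x) * indicator {R..} x))"
      using pt[of x] by (rule ennreal_leI)
    also have "\<dots> = ennreal (exp (a * R)) * ennreal (f x) + ennreal (Dc * E) * (ennreal (exp (- \<delta> * x)) * indicator {R..} x)"
      using fnn[of x] Dc E by (simp add: ennreal_mult ennreal_plus indicator_def)
    finally show "ennreal (f x) * ennreal (exp (a * max x 0)) \<le> \<dots>" .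
  qed
  also have "\<dots> = ennreal (exp (a * R)) * (\<integral>\<^sup>+x. ennreal (f x) \<partial>lborel) + ennreal (Dc * E) * (\<integral>\<^sup>+x. ennreal (exp (- \<delta> * x)) * indicator {R..} x \<partial>lborel)"
    by (subst nn_integral_add) (auto simp: nn_integral_cmult)
  also have "(\<integral>\<^sup>+x. ennreal (f x) \<partial>lborel) = 1"
  proof -
    have "emeasure M (X -` UNIV \<inter> space M) = (\<integral>\<^sup>+x. ennreal (f x) * indicator UNIV x \<partial>lborel)"
      using distributed_emeasure[OF D, of UNIV] unfolding f_def by simp
    thus ?thesis by (simp add: emeasure_space_1)
  qed
  also have "(\<integral>\<^sup>+x. ennreal (exp (- \<delta> * x)) * indicator {R..} x \<partial>lborel) = ennreal (exp (- \<delta> * R) / \<delta>)"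
    using nn_integral_exp_atLeast[OF \<delta>] .
  finally have le: "(\<integral>\<^sup>+\<omega>. ennreal (exp (a * max (X \<omega>) 0)) \<partial>M) \<le> ennreal (exp (a * R)) * 1 + ennreal (Dc * E) * ennreal (exp (- \<delta> * R) / \<delta>)" .
  have "ennreal (exp (a * R)) * 1 + ennreal (Dc * E) * ennreal (exp (- \<delta> * R) / \<delta>) = ennreal (exp (a * R) + Dc * E * (exp (- \<delta> * R) / \<delta>))"
    using Dc E \<delta> by (simp add: ennreal_mult[symmetric] mult.assoc)
  with le show ?thesis by (auto simp: top_unique)
qed

end


context prob_space
begin

lemma vg_N2:
  assumes D: "distributed M lborel X (\<lambda>x. ennreal (vg_pdf \<mu> \<alpha> \<beta> x))"
    and p: "\<mu> > -1/2" "\<alpha> > 0" "\<bar>\<beta>\<bar> < \<alpha>"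
    and a: "a > \<alpha> - \<beta>"
  shows "\<forall>\<^sub>F x in at_top. exp (- a * x) \<le> measure M {\<omega> \<in> space M. x < X \<omega>}"
proof -
  define f where "f x = vg_pdf \<mu> \<alpha> \<beta> x" for x
  have fnn: "f x \<ge> 0" for x unfolding f_def using vg_pdf_nonneg[OF p] .
  define l where "l = \<alpha> - \<beta>"
  have l: "l > 0" using p by (simp add: l_def)
  define \<delta> where "\<delta> = (a - l) / 3"
  have \<delta>: "\<delta> > 0" using a by (simp add: \<delta>_def l_def)
  define c where "c = ln (1 + \<delta> / \<alpha>)"
  have da: "\<delta> / \<alpha> > 0" using \<delta> p by simp
  have c: "c > 0" unfolding c_def using da by (intro ln_gt_zero) simp
  have "cosh c \<le> exp c" using cosh_le_exp_abs[of c] c by simp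
  also have "exp c = 1 + \<delta> / \<alpha>" using da unfolding c_def by (intro exp_ln) simp
  finally have "\<alpha> * cosh c \<le> \<alpha> * (1 + \<delta> / \<alpha>)" using p by (simp add: mult_left_mono)
  moreover have "\<alpha> * (1 + \<delta> / \<alpha>) = \<alpha> + \<delta>" using p by (simp add: distrib_left)
  ultimately have cc: "\<alpha> * cosh c - \<beta> \<le> l + \<delta>" by (simp add: l_def)
  obtain E where E: "E > 0" "\<And>x. x \<ge> 1 \<Longrightarrow> exp (- \<delta> * x) \<le> E * x powr \<mu>"
    using powr_exp_bounds[OF \<delta>, of \<mu>] by blast
  have C: "vgC \<mu> \<alpha> \<beta> > 0" using vgC_pos[OF p] .
  define A where "A = vgC \<mu> \<alpha> \<beta> * c / E"
  have A: "A > 0" using C c E by (simp add: A_def)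
  have low: "A * exp (- (l + 2 * \<delta>) * t) \<le> f t" if t: "t \<ge> 1" for t
  proof -
    have "exp (- \<delta> * t) / E \<le> t powr \<mu>" using E(2)[OF t] E(1) by (simp add: divide_le_eq mult.commute)
    moreover have "exp (- (l + \<delta>) * t) \<le> exp (- (\<alpha> * cosh c - \<beta>) * t)"
      using cc t by (simp add: mult_right_mono)
    ultimately have "(vgC \<mu> \<alpha> \<beta> * c) * (exp (- \<delta> * t) / E) * exp (- (l + \<delta>) * t)
        \<le> (vgC \<mu> \<alpha> \<beta> * c) * t powr \<mu> * exp (- (\<alpha> * cosh c - \<beta>) * t)"
      using C c E by (intro mult_mono mult_left_mono) auto
    also have "\<dots> \<le> f t" unfolding f_def using vg_lower[OF _ p(2) _ c] C t by simp
    also have "(vgC \<mu> \<alpha> \<beta> * c) * (exp (- \<delta> * t) / E) * exp (- (l + \<delta>) * t) = A * exp (- (l + 2 * \<delta>) * t)"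
    proof -
      have "exp (- \<delta> * t) * exp (- (l + \<delta>) * t) = exp (- (l + 2 * \<delta>) * t)"
        unfolding exp_add[symmetric] by (simp add: algebra_simps)
      thus ?thesis unfolding A_def by (metis (no_types, lifting) mult.assoc mult.commute times_divide_eq_right)
    qed
    finally show ?thesis .
  qed
  have fm[measurable]: "f \<in> borel_measurable borel"
    using distributed_real_measurable[OF _ D] fnn unfolding f_def by auto
  have meas_ge: "A * exp (- (l + 2 * \<delta>) * (x + 1)) \<le> measure M {\<omega> \<in> space M. x < X \<omega>}" if x: "x \<ge> 1" for x
  proof -
    have set: "{\<omega> \<in> space M. x < X \<omega>} = X -` {x<..} \<inter> space M" by auto
    have "ennreal (A * exp (- (l + 2 * \<delta>) * (x + 1))) = (\<integral>\<^sup>+t. ennreal (A * exp (- (l + 2 * \<delta>) * (x + 1))) * indicator {x<..x+1} t \<partial>lborel)"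
      by (simp add: nn_integral_cmult_indicator)
    also have "\<dots> \<le> (\<integral>\<^sup>+t. ennreal (f t) * indicator {x<..} t \<partial>lborel)"
    proof (rule nn_integral_mono)
      fix t
      show "ennreal (A * exp (- (l + 2 * \<delta>) * (x + 1))) * indicator {x<..x+1} t \<le> ennreal (f t) * indicator {x<..} t"
      proof (cases "x < t \<and> t \<le> x + 1")
        case True
        have "A * exp (- (l + 2 * \<delta>) * (x + 1)) \<le> A * exp (- (l + 2 * \<delta>) * t)"
          using True A l \<delta> by (simp add: mult_left_mono)
        also have "\<dots> \<le> f t" using low[of t] True x by simp
        finally have "ennreal (A * exp (- (l + 2 * \<delta>) * (x + 1))) \<le> ennreal (f t)" by (rule ennreal_leI)
        then show ?thesis using True by (simp add: indicator_def)
      qed (auto simp: indicator_def)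
    qed
    also have "\<dots> = emeasure M {\<omega> \<in> space M. x < X \<omega>}"
      unfolding set using distributed_emeasure[OF D, of "{x<..}"] unfolding f_def by simp
    also have "\<dots> = ennreal (measure M {\<omega> \<in> space M. x < X \<omega>})" by (rule emeasure_eq_measure)
    finally show ?thesis by (simp add: ennreal_le_iff)
  qed
  show ?thesis
  proof (rule eventually_mono[OF eventually_ge_at_top[of "max 1 ((l + 2 * \<delta> - ln A) / \<delta>)"]])
    fix x assume "max 1 ((l + 2 * \<delta> - ln A) / \<delta>) \<le> x"
    hence x1: "x \<ge> 1" and x2: "(l + 2 * \<delta> - ln A) / \<delta> \<le> x" by auto
    from x2 \<delta> have "l + 2 * \<delta> - ln A \<le> x * \<delta>" by (simp add: pos_divide_le_eq)
    moreover have "a = l + 3 * \<delta>" unfolding \<delta>_def by (simp add: field_simps)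
    ultimately have "- a * x \<le> ln A - (l + 2 * \<delta>) * (x + 1)" by (simp add: algebra_simps)
    hence "exp (- a * x) \<le> exp (ln A - (l + 2 * \<delta>) * (x + 1))" by simp
    also have "\<dots> = exp (ln A) * exp (- (l + 2 * \<delta>) * (x + 1))"
      unfolding exp_add[symmetric] by (simp add: algebra_simps)
    also have "\<dots> = A * exp (- (l + 2 * \<delta>) * (x + 1))" using A by simp
    also have "\<dots> \<le> measure M {\<omega> \<in> space M. x < X \<omega>}" by (rule meas_ge[OF x1])
    finally show "exp (- a * x) \<le> measure M {\<omega> \<in> space M. x < X \<omega>}" .
  qed
qed

lemma vg_N3:
  assumes D: "distributed M lborel X (\<lambda>x. ennreal (vg_pdf \<mu> \<alpha> \<beta> x))"
    and p: "\<mu> > -1/2" "\<alpha> > 0" "\<bar>\<beta>\<bar> < \<alpha>"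
    and ab: "0 < a" "a < b"
  shows "0 < measure M {\<omega> \<in> space M. a < X \<omega> \<and> X \<omega> < b}"
proof -
  define f where "f x = vg_pdf \<mu> \<alpha> \<beta> x" for x
  have fnn: "f x \<ge> 0" for x unfolding f_def using vg_pdf_nonneg[OF p] .
  have fm[measurable]: "f \<in> borel_measurable borel"
    using distributed_real_measurable[OF _ D] fnn unfolding f_def by auto
  have set: "{\<omega> \<in> space M. a < X \<omega> \<and> X \<omega> < b} = X -` {a<..<b} \<inter> space M" by auto
  have em: "emeasure M {\<omega> \<in> space M. a < X \<omega> \<and> X \<omega> < b} = (\<integral>\<^sup>+t. ennreal (f t) * indicator {a<..<b} t \<partial>lborel)"
    unfolding set using distributed_emeasure[OF D, of "{a<..<b}"] unfolding f_def by simp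
  have "(\<integral>\<^sup>+t. ennreal (f t) * indicator {a<..<b} t \<partial>lborel) \<noteq> 0"
  proof
    assume "(\<integral>\<^sup>+t. ennreal (f t) * indicator {a<..<b} t \<partial>lborel) = 0"
    hence "AE t in lborel. ennreal (f t) * indicator {a<..<b} t = 0"
      by (subst (asm) nn_integral_0_iff_AE) auto
    hence "AE t in lborel. t \<notin> {a<..<b}"
    proof (rule AE_mp[OF _ AE_I2], intro impI)
      fix t assume h: "ennreal (f t) * indicator {a<..<b} t = 0"
      show "t \<notin> {a<..<b}"
      proof
        assume t: "t \<in> {a<..<b}"
        hence "f t > 0" unfolding f_def using ab by (intro vg_pdf_pos[OF p]) auto
        thus False using h t by simp
      qed
    qed
    hence "emeasure lborel {a<..<b} = 0"
      by (subst (asm) AE_iff_measurable[of "{a<..<b}"]) auto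
    thus False using ab by simp
  qed
  hence "emeasure M {\<omega> \<in> space M. a < X \<omega> \<and> X \<omega> < b} \<noteq> 0" using em by simp
  thus ?thesis by (simp add: emeasure_eq_measure zero_less_measure_iff)
qed

end


context prob_space
begin

lemma vg_nice:
  assumes D: "distributed M lborel X (\<lambda>x. ennreal (vg_pdf \<mu> \<alpha> \<beta> x))"
    and p: "\<mu> > -1/2" "\<alpha> > 0" "\<bar>\<beta>\<bar> < \<alpha>"
  shows "nice M X (\<alpha> - \<beta>)"
  unfolding nice_def using vg_N1[OF D p] vg_N2[OF D p] vg_N3[OF D p] p by auto

lemma vg_neg:
  assumes D: "distributed M lborel X (\<lambda>x. ennreal (vg_pdf \<mu> \<alpha> \<beta> x))"
  shows "distributed M lborel (\<lambda>\<omega>. - X \<omega>) (\<lambda>x. ennreal (vg_pdf \<mu> \<alpha> (- \<beta>) x))"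
  using distributed_affine[OF D, of "-1" 0] by (simp add: vg_pdf_neg[symmetric] divide_ennreal_def)

end


lemma tail_lim:
  fixes G :: "real \<Rightarrow> real" and \<xi> :: real
  assumes \<xi>: "\<xi> > 0"
    and lo: "\<And>c. c > \<xi> \<Longrightarrow> \<exists>Z. \<forall>z\<ge>Z. exp (- 2 * sqrt c * sqrt z) \<le> G z"
    and up: "\<And>c. 0 < c \<Longrightarrow> c < \<xi> \<Longrightarrow> \<exists>C. \<forall>z\<ge>0. G z \<le> C * exp (- 2 * sqrt c * sqrt z)"
  shows "((\<lambda>z. ln (G z) / sqrt z) \<longlongrightarrow> - 2 * sqrt \<xi>) at_top"
proof (rule tendstoI)
  fix \<epsilon> :: real assume \<epsilon>: "\<epsilon> > 0"
  define s where "s = sqrt \<xi>"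
  have s: "s > 0" using \<xi> by (simp add: s_def)
  define e where "e = min \<epsilon> s / 4"
  have e: "e > 0" "4 * e \<le> \<epsilon>" "4 * e \<le> s" using \<epsilon> s by (auto simp: e_def)
  have sq1: "sqrt ((s + e)\<^sup>2) = s + e" using s e by simp
  have sq2: "sqrt ((s - e)\<^sup>2) = s - e" using s e by simp
  have "(s + e)\<^sup>2 > \<xi>"
  proof -
    have "s\<^sup>2 < (s + e)\<^sup>2" using s e by (intro power_strict_mono) auto
    thus ?thesis using \<xi> by (simp add: s_def)
  qed
  then obtain Z1 where Z1': "\<forall>z\<ge>Z1. exp (- 2 * sqrt ((s + e)\<^sup>2) * sqrt z) \<le> G z"
    using lo[of "(s + e)\<^sup>2"] by blast
  have Z1: "exp (- 2 * (s + e) * sqrt z) \<le> G z" if "z \<ge> Z1" for z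
    using Z1' that unfolding sq1 by blast
  have "(s - e)\<^sup>2 < \<xi>"
  proof -
    have "(s - e)\<^sup>2 < s\<^sup>2" using s e by (intro power_strict_mono) auto
    thus ?thesis using \<xi> by (simp add: s_def)
  qed
  moreover have "(s - e)\<^sup>2 > 0" using s e by simp
  ultimately obtain C where C': "\<forall>z\<ge>0. G z \<le> C * exp (- 2 * sqrt ((s - e)\<^sup>2) * sqrt z)"
    using up[of "(s - e)\<^sup>2"] by blast
  have C: "G z \<le> C * exp (- 2 * (s - e) * sqrt z)" if "z \<ge> 0" for z
    using C' that unfolding sq2 by blast
  define K where "K = max 1 (max Z1 ((\<bar>ln C\<bar> / e)\<^sup>2))"
  show "\<forall>\<^sub>F z in at_top. dist (ln (G z) / sqrt z) (- 2 * sqrt \<xi>) < \<epsilon>"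
  proof (rule eventually_mono[OF eventually_ge_at_top[of K]])
    fix z assume zK: "K \<le> z"
    hence z1: "z \<ge> 1" and zZ: "z \<ge> Z1" and zC: "z \<ge> (\<bar>ln C\<bar> / e)\<^sup>2" by (auto simp: K_def)
    define y where "y = sqrt z"
    have y: "y > 0" using z1 by (simp add: y_def)
    have yC: "\<bar>ln C\<bar> / e \<le> y" unfolding y_def using zC by (simp add: real_le_rsqrt)
    hence lnC: "\<bar>ln C\<bar> \<le> e * y" using e by (simp add: divide_le_eq mult.commute)
    have Gl: "exp (- 2 * (s + e) * y) \<le> G z" using Z1[OF zZ] by (simp add: y_def)
    have Gu: "G z \<le> C * exp (- 2 * (s - e) * y)" using C[of z] z1 by (simp add: y_def)
    have Gpos: "G z > 0" using Gl by (smt (verit) exp_gt_zero)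
    have Cpos: "C > 0" using Gpos Gu by (smt (verit) exp_gt_zero mult_nonpos_nonneg)
    have l1: "- 2 * (s + e) * y \<le> ln (G z)" using Gl Gpos by (metis exp_le_cancel_iff exp_ln)
    have "ln (G z) \<le> ln (C * exp (- 2 * (s - e) * y))" using Gu Gpos by (simp add: ln_le_cancel_iff)
    also have "\<dots> = ln C - 2 * (s - e) * y" using Cpos by (simp add: ln_mult algebra_simps)
    finally have l2: "ln (G z) \<le> ln C - 2 * (s - e) * y" .
    have a1: "- 2 * (s + e) \<le> ln (G z) / y" using l1 y by (simp add: pos_le_divide_eq)
    have "ln (G z) \<le> (- 2 * (s - e) + e) * y" using l2 lnC by (simp add: algebra_simps)
    hence a2: "ln (G z) / y \<le> - 2 * (s - e) + e" using y by (simp add: pos_divide_le_eq)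
    have "\<bar>ln (G z) / y + 2 * s\<bar> \<le> 3 * e" using a1 a2 by (simp add: algebra_simps abs_le_iff)
    hence "\<bar>ln (G z) / y + 2 * s\<bar> < \<epsilon>" using e by linarith
    thus "dist (ln (G z) / sqrt z) (- 2 * sqrt \<xi>) < \<epsilon>"
      by (simp add: dist_real_def y_def s_def)
  qed
qed



lemma quantile_asymp:
  fixes F :: "real \<Rightarrow> real" and \<xi> :: real
  assumes cont: "\<And>z. isCont F z" and mono: "mono F" and lim1: "(F \<longlongrightarrow> 1) at_top"
    and le1: "\<And>z. F z \<le> 1"
    and strict: "\<And>z w. 0 < z \<Longrightarrow> z < w \<Longrightarrow> F z < F w"
    and \<xi>: "\<xi> > 0"
    and tail: "((\<lambda>z. ln (1 - F z) / sqrt z) \<longlongrightarrow> - 2 * sqrt \<xi>) at_top"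
  shows "(\<forall>\<^sub>F p in at_left 1. \<exists>!z. F z = p) \<and>
         quantile F \<sim>[at_left 1] (\<lambda>p. (ln (1 - p))\<^sup>2 / (4 * \<xi>))"
proof -
  have Flt1: "F z < 1" if "z \<ge> 1" for z
    using strict[of z "z + 1"] le1[of "z + 1"] that by simp
  have ex: "\<exists>!z. F z = p" if p: "F 1 < p" "p < 1" for p
  proof -
    have "\<forall>\<^sub>F x in at_top. p < F x" using lim1 p(2) by (rule order_tendstoD(1))
    then obtain T0 where T0: "\<And>x. x \<ge> T0 \<Longrightarrow> p < F x" by (auto simp: eventually_at_top_linorder)
    define T where "T = max 1 T0"
    have "p < F T" using T0[of T] by (simp add: T_def)
    moreover have "continuous_on {1..T} F" by (intro continuous_at_imp_continuous_on ballI cont)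
    moreover have "1 \<le> T" by (simp add: T_def)
    ultimately obtain z where "1 \<le> z" "z \<le> T" "F z = p"
      using IVT'[of F 1 p T] p by auto
    moreover have "z = w" if "F z = p" "F w = p" for z w
    proof -
      have gt: "u > 1" if "F u = p" for u
      proof (rule ccontr)
        assume "\<not> u > 1"
        hence "F u \<le> F 1" using mono by (simp add: monoD)
        thus False using p that by simp
      qed
      show "z = w"
      proof (rule ccontr)
        assume "z \<noteq> w"
        hence "z < w \<or> w < z" by linarith
        thus False
        proof
          assume "z < w"
          from strict[OF _ this] gt[OF that(1)] have "F z < F w" by simp
          thus False using that by simp
        next
          assume "w < z"
          from strict[OF _ this] gt[OF that(2)] have "F w < F z" by simp
          thus False using that by simp
        qed
      qed
    qed
    ultimately show ?thesis by blast
  qed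
  have ev: "\<forall>\<^sub>F p in at_left 1. \<exists>!z. F z = p"
    using eventually_at_left_real[OF Flt1[of 1]] by (rule eventually_mono) (use ex in auto)
  define Q where "Q = quantile F"
  have FQ: "\<forall>\<^sub>F p in at_left 1. F (Q p) = p"
  proof (rule eventually_mono[OF ev])
    fix p assume "\<exists>!z. F z = p"
    thus "F (Q p) = p" unfolding Q_def quantile_def by (rule theI')
  qed
  have Qlim: "filterlim Q at_top (at_left 1)"
    unfolding filterlim_at_top
  proof
    fix T :: real
    define T' where "T' = max T 1"
    have "F T' < 1" using Flt1[of T'] by (simp add: T'_def)
    from eventually_conj[OF eventually_at_left_real[OF this] FQ]
    show "\<forall>\<^sub>F p in at_left 1. T \<le> Q p"
    proof (rule eventually_mono)
      fix p assume h: "p \<in> {F T'<..<1} \<and> F (Q p) = p"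
      show "T \<le> Q p"
      proof (rule ccontr)
        assume "\<not> T \<le> Q p"
        hence "Q p \<le> T'" by (simp add: T'_def)
        hence "F (Q p) \<le> F T'" using mono by (simp add: monoD)
        thus False using h by simp
      qed
    qed
  qed
  have Qpos: "\<forall>\<^sub>F p in at_left 1. Q p > 0"
    using Qlim unfolding filterlim_at_top_dense by blast
  have p01: "\<forall>\<^sub>F p in at_left 1. p \<in> {0<..<1::real}"
    by (rule eventually_at_left_real) simp
  have L: "((\<lambda>p. ln (1 - F (Q p)) / sqrt (Q p)) \<longlongrightarrow> - 2 * sqrt \<xi>) (at_left 1)"
    using filterlim_compose[OF tail Qlim] by (simp add: o_def)
  have L': "((\<lambda>p. ln (1 - p) / sqrt (Q p)) \<longlongrightarrow> - 2 * sqrt \<xi>) (at_left 1)"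
    using L by (rule Lim_transform_eventually) (rule eventually_mono[OF FQ], simp)
  have R: "((\<lambda>p. 4 * \<xi> / (ln (1 - p) / sqrt (Q p))\<^sup>2) \<longlongrightarrow> 4 * \<xi> / (- 2 * sqrt \<xi>)\<^sup>2) (at_left 1)"
    by (intro tendsto_divide tendsto_const tendsto_power L') (use \<xi> in simp)
  have "4 * \<xi> / (- 2 * sqrt \<xi>)\<^sup>2 = 1" using \<xi> by (simp add: power_mult_distrib)
  with R have R1: "((\<lambda>p. 4 * \<xi> / (ln (1 - p) / sqrt (Q p))\<^sup>2) \<longlongrightarrow> 1) (at_left 1)" by simp
  have "((\<lambda>p. Q p / ((ln (1 - p))\<^sup>2 / (4 * \<xi>))) \<longlongrightarrow> 1) (at_left 1)"
    using R1
  proof (rule Lim_transform_eventually)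
    show "\<forall>\<^sub>F p in at_left 1. 4 * \<xi> / (ln (1 - p) / sqrt (Q p))\<^sup>2 = Q p / ((ln (1 - p))\<^sup>2 / (4 * \<xi>))"
      using eventually_conj[OF Qpos p01]
    proof (rule eventually_mono)
      fix p assume h: "0 < Q p \<and> p \<in> {0<..<1::real}"
      have "ln (1 - p) \<noteq> 0" using h by simp
      thus "4 * \<xi> / (ln (1 - p) / sqrt (Q p))\<^sup>2 = Q p / ((ln (1 - p))\<^sup>2 / (4 * \<xi>))"
      proof -
        have "(ln (1 - p) / sqrt (Q p))\<^sup>2 = (ln (1 - p))\<^sup>2 / Q p" using h by (simp add: power_divide)
        thus ?thesis using h \<open>ln (1 - p) \<noteq> 0\<close> \<xi> by (simp add: field_simps)
      qed
    qed
  qed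
  hence "Q \<sim>[at_left 1] (\<lambda>p. (ln (1 - p))\<^sup>2 / (4 * \<xi>))" by (rule asymp_equivI')
  with ev show ?thesis by (simp add: Q_def)
qed



context prob_space
begin

lemma indep_joint_lborel:
  fixes U V :: "'a \<Rightarrow> real"
  assumes DU: "distributed M lborel U fU" and DV: "distributed M lborel V fV"
    and ind: "indep_var borel U borel V"
  shows "distributed M (lborel \<Otimes>\<^sub>M lborel) (\<lambda>\<omega>. (U \<omega>, V \<omega>)) (\<lambda>(x, y). fU x * fV y)"
proof -
  have e: "distr M borel U \<Otimes>\<^sub>M distr M borel V = distr M (borel \<Otimes>\<^sub>M borel) (\<lambda>\<omega>. (U \<omega>, V \<omega>))"
    using indep_var_distribution_eq[THEN iffD1, OF ind] by blast
  have e1: "distr M lborel U = distr M borel U" by (rule distr_cong) auto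
  have e2: "distr M lborel V = distr M borel V" by (rule distr_cong) auto
  have e3: "distr M (lborel \<Otimes>\<^sub>M lborel) (\<lambda>\<omega>. (U \<omega>, V \<omega>)) = distr M (borel \<Otimes>\<^sub>M borel) (\<lambda>\<omega>. (U \<omega>, V \<omega>))"
    by (rule distr_cong) (auto intro!: sets_pair_measure_cong)
  show ?thesis
    by (rule distributed_joint_indep'[OF lborel.sigma_finite_measure_axioms lborel.sigma_finite_measure_axioms DU DV])
       (simp add: e e1 e2 e3)
qed

lemma prod_level_null:
  fixes U V :: "'a \<Rightarrow> real" and z :: real
  assumes DU: "distributed M lborel U fU" and DV: "distributed M lborel V fV"
    and ind: "indep_var borel U borel V"
  shows "measure M {\<omega> \<in> space M. U \<omega> * V \<omega> = z} = 0"
proof -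
  note J = indep_joint_lborel[OF DU DV ind]
  define S where "S = {p :: real \<times> real. fst p * snd p = z}"
  have fm: "(\<lambda>p::real\<times>real. fst p * snd p) \<in> borel_measurable (borel \<Otimes>\<^sub>M borel)" by measurable
  have "(\<lambda>p::real\<times>real. fst p * snd p) -` {z} \<inter> space (borel \<Otimes>\<^sub>M borel) \<in> sets (borel \<Otimes>\<^sub>M borel)"
    by (rule measurable_sets[OF fm]) simp
  hence S: "S \<in> sets (lborel \<Otimes>\<^sub>M lborel)"
    unfolding S_def by (simp add: space_pair_measure vimage_def)
  have "emeasure (lborel \<Otimes>\<^sub>M lborel) S = (\<integral>\<^sup>+x. emeasure lborel (Pair x -` S) \<partial>lborel)"
    by (rule lborel.emeasure_pair_measure_alt[OF S])
  also have "\<dots> = 0"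
  proof (rule nn_integral_zero')
    show "AE x in lborel. emeasure lborel (Pair x -` S) = 0"
      using AE_lborel_singleton[of 0]
    proof (rule AE_mp, intro AE_I2 impI)
      fix x :: real assume "x \<noteq> 0"
      hence "Pair x -` S = {z / x}" by (auto simp: S_def field_simps)
      thus "emeasure lborel (Pair x -` S) = 0" by simp
    qed
  qed
  finally have N: "S \<in> null_sets (lborel \<Otimes>\<^sub>M lborel)" using S by (simp add: null_sets_def)
  have set: "{\<omega> \<in> space M. U \<omega> * V \<omega> = z} = (\<lambda>\<omega>. (U \<omega>, V \<omega>)) -` S \<inter> space M"
    by (auto simp: S_def)
  have "emeasure M {\<omega> \<in> space M. U \<omega> * V \<omega> = z} = (\<integral>\<^sup>+p. (case p of (x, y) \<Rightarrow> fU x * fV y) * indicator S p \<partial>(lborel \<Otimes>\<^sub>M lborel))"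
    unfolding set by (rule distributed_emeasure[OF J S])
  also have "\<dots> = 0" by (rule nn_integral_null_set[OF N])
  finally show ?thesis by (simp add: measure_def)
qed

end


lemma niceD:
  assumes "nice M U l"
  shows "l > 0"
    and "\<And>a. 0 < a \<Longrightarrow> a < l \<Longrightarrow> (\<integral>\<^sup>+\<omega>. ennreal (exp (a * max (U \<omega>) 0)) \<partial>M) \<noteq> \<infinity>"
    and "\<And>a. a > l \<Longrightarrow> \<forall>\<^sub>F x in at_top. exp (- a * x) \<le> measure M {\<omega> \<in> space M. x < U \<omega>}"
    and "\<And>a b. 0 < a \<Longrightarrow> a < b \<Longrightarrow> 0 < measure M {\<omega> \<in> space M. a < U \<omega> \<and> U \<omega> < b}"
  using assms unfolding nice_def by auto

context prob_space
begin

lemma indep_nn_prod: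
  fixes U V :: "'a \<Rightarrow> real" and g1 g2 :: "real \<Rightarrow> real"
  assumes ind: "indep_var borel U borel V"
    and g1[measurable]: "g1 \<in> borel_measurable borel" and g2[measurable]: "g2 \<in> borel_measurable borel"
  shows "(\<integral>\<^sup>+\<omega>. ennreal (g1 (U \<omega>)) * ennreal (g2 (V \<omega>)) \<partial>M)
       = (\<integral>\<^sup>+\<omega>. ennreal (g1 (U \<omega>)) \<partial>M) * (\<integral>\<^sup>+\<omega>. ennreal (g2 (V \<omega>)) \<partial>M)"
proof -
  define Y1 where "Y1 u = ennreal (g1 u)" for u
  define Y2 where "Y2 u = ennreal (g2 u)" for u
  have m1: "Y1 \<in> measurable borel borel" unfolding Y1_def by measurable
  have m2: "Y2 \<in> measurable borel borel" unfolding Y2_def by measurable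
  have "indep_var borel (Y1 \<circ> U) borel (Y2 \<circ> V)" by (rule indep_var_compose[OF ind m1 m2])
  hence iv: "indep_vars (case_bool borel borel) (case_bool (Y1 \<circ> U) (Y2 \<circ> V)) UNIV"
    unfolding indep_var_def .
  have cb: "case_bool borel borel = (\<lambda>_::bool. borel :: ennreal measure)"
    by (rule ext) (simp split: bool.split)
  have "(\<integral>\<^sup>+\<omega>. (\<Prod>i\<in>UNIV. case_bool (Y1 \<circ> U) (Y2 \<circ> V) i \<omega>) \<partial>M) = (\<Prod>i\<in>UNIV. \<integral>\<^sup>+\<omega>. case_bool (Y1 \<circ> U) (Y2 \<circ> V) i \<omega> \<partial>M)"
    by (rule indep_vars_nn_integral) (use iv cb in auto)
  thus ?thesis unfolding Y1_def Y2_def o_def by (simp add: UNIV_bool mult.commute)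
qed

lemma prod_pos:
  fixes U V :: "'a \<Rightarrow> real"
  assumes ind: "indep_var borel U borel V" and nU: "nice M U l1" and nV: "nice M V l2"
    and z: "0 < z1" "z1 < z2"
  shows "0 < measure M {\<omega> \<in> space M. z1 < U \<omega> * V \<omega> \<and> U \<omega> * V \<omega> \<le> z2}"
proof -
  have [measurable]: "U \<in> borel_measurable M" using indep_var_rv1[OF ind] by simp
  have [measurable]: "V \<in> borel_measurable M" using indep_var_rv2[OF ind] by simp
  define r where "r = sqrt (z2 / z1)"
  have "1 < z2 / z1" using z by simp
  hence r1: "r > 1" unfolding r_def by (simp add: real_less_rsqrt)
  have "r * r = \<bar>z2 / z1\<bar>" unfolding r_def by (rule real_sqrt_mult_self)
  hence rr: "r * r = z2 / z1" using z by simp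
  have r2: "z1 * r * r = z2"
  proof -
    have "z1 * r * r = z1 * (r * r)" by (rule mult.assoc)
    also have "\<dots> = z1 * (z2 / z1)" by (simp only: rr)
    also have "\<dots> = z2" using z by simp
    finally show ?thesis .
  qed
  have "z1 < z1 * r" using z r1 by simp
  hence pU: "0 < measure M {\<omega> \<in> space M. z1 < U \<omega> \<and> U \<omega> < z1 * r}"
    using niceD(4)[OF nU] z by blast
  have pV: "0 < measure M {\<omega> \<in> space M. 1 < V \<omega> \<and> V \<omega> < r}"
    using niceD(4)[OF nV] r1 by simp
  have "prob ((\<lambda>x. (U x, V x)) -` ({z1<..<z1 * r} \<times> {1<..<r}) \<inter> space M) =
    prob (U -` {z1<..<z1 * r} \<inter> space M) * prob (V -` {1<..<r} \<inter> space M)"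
    by (rule indep_varD[OF ind]) auto
  also have "U -` {z1<..<z1 * r} \<inter> space M = {\<omega> \<in> space M. z1 < U \<omega> \<and> U \<omega> < z1 * r}" by auto
  also have "V -` {1<..<r} \<inter> space M = {\<omega> \<in> space M. 1 < V \<omega> \<and> V \<omega> < r}" by auto
  finally have eq: "prob ((\<lambda>x. (U x, V x)) -` ({z1<..<z1 * r} \<times> {1<..<r}) \<inter> space M) =
    prob {\<omega> \<in> space M. z1 < U \<omega> \<and> U \<omega> < z1 * r} * prob {\<omega> \<in> space M. 1 < V \<omega> \<and> V \<omega> < r}" .
  have sub: "(\<lambda>x. (U x, V x)) -` ({z1<..<z1 * r} \<times> {1<..<r}) \<inter> space M \<subseteq> {\<omega> \<in> space M. z1 < U \<omega> * V \<omega> \<and> U \<omega> * V \<omega> \<le> z2}"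
  proof
    fix \<omega> assume "\<omega> \<in> (\<lambda>x. (U x, V x)) -` ({z1<..<z1 * r} \<times> {1<..<r}) \<inter> space M"
    hence h: "z1 < U \<omega>" "U \<omega> < z1 * r" "1 < V \<omega>" "V \<omega> < r" "\<omega> \<in> space M" by auto
    have "U \<omega> * 1 < U \<omega> * V \<omega>" using h z by (intro mult_strict_left_mono) auto
    hence a: "z1 < U \<omega> * V \<omega>" using h by simp
    have "U \<omega> * V \<omega> < (z1 * r) * r" using h z by (intro mult_strict_mono) auto
    hence "U \<omega> * V \<omega> < z2" using r2 by simp
    thus "\<omega> \<in> {\<omega> \<in> space M. z1 < U \<omega> * V \<omega> \<and> U \<omega> * V \<omega> \<le> z2}" using a h by simp
  qed
  have "0 < prob ((\<lambda>x. (U x, V x)) -` ({z1<..<z1 * r} \<times> {1<..<r}) \<inter> space M)"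
    unfolding eq using pU pV by simp
  also have "\<dots> \<le> measure M {\<omega> \<in> space M. z1 < U \<omega> * V \<omega> \<and> U \<omega> * V \<omega> \<le> z2}"
    by (rule finite_measure_mono[OF sub]) measurable
  finally show ?thesis .
qed

end


context prob_space
begin

lemma prod_tail_lower:
  fixes U V :: "'a \<Rightarrow> real"
  assumes ind: "indep_var borel U borel V" and nU: "nice M U l1" and nV: "nice M V l2"
    and c: "c > l1 * l2"
  shows "\<exists>Z. \<forall>z\<ge>Z. exp (- 2 * sqrt c * sqrt z) \<le> measure M {\<omega> \<in> space M. z < U \<omega> * V \<omega>}"
proof -
  have [measurable]: "U \<in> borel_measurable M" using indep_var_rv1[OF ind] by simp
  have [measurable]: "V \<in> borel_measurable M" using indep_var_rv2[OF ind] by simp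
  have l1: "l1 > 0" using niceD(1)[OF nU] .
  have l2: "l2 > 0" using niceD(1)[OF nV] .
  have l12: "l1 * l2 > 0" using l1 l2 by simp
  have cpos: "c > 0" using c l12 by linarith
  define t where "t = sqrt (c / (l1 * l2))"
  have "1 < c / (l1 * l2)" using c l12 by simp
  hence t1: "t > 1" unfolding t_def by (simp add: real_less_rsqrt)
  have tt: "t * t = c / (l1 * l2)"
  proof -
    have "t * t = \<bar>c / (l1 * l2)\<bar>" unfolding t_def by (rule real_sqrt_mult_self)
    thus ?thesis using cpos l12 by simp
  qed
  define a1 where "a1 = l1 * t"
  define a2 where "a2 = l2 * t"
  have a1: "a1 > l1" using l1 t1 by (simp add: a1_def)
  have a2: "a2 > l2" using l2 t1 by (simp add: a2_def)
  have a12: "a1 * a2 = c"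
  proof -
    have "a1 * a2 = (l1 * l2) * (t * t)" by (simp add: a1_def a2_def algebra_simps)
    also have "\<dots> = c" using tt l1 l2 by simp
    finally show ?thesis .
  qed
  have a1p: "a1 > 0" and a2p: "a2 > 0" using a1 a2 l1 l2 by auto
  obtain N1 where N1: "\<And>x. x \<ge> N1 \<Longrightarrow> exp (- a1 * x) \<le> measure M {\<omega> \<in> space M. x < U \<omega>}"
    using niceD(3)[OF nU a1] by (auto simp: eventually_at_top_linorder)
  obtain N2 where N2: "\<And>x. x \<ge> N2 \<Longrightarrow> exp (- a2 * x) \<le> measure M {\<omega> \<in> space M. x < V \<omega>}"
    using niceD(3)[OF nV a2] by (auto simp: eventually_at_top_linorder)
  define B where "B = max (max N1 0 * a1) (max N2 0 * a2) / sqrt c"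
  show ?thesis
  proof (intro exI allI impI)
    fix z :: real assume zZ: "B\<^sup>2 \<le> z"
    have z0: "z \<ge> 0" using zZ by (metis order.trans zero_le_power2)
    define s where "s = sqrt z"
    have sB: "B \<le> s" unfolding s_def using zZ by (simp add: real_le_rsqrt)
    have sc: "sqrt c > 0" using cpos by simp
    have Bs: "max (max N1 0 * a1) (max N2 0 * a2) \<le> sqrt c * s"
      using sB sc unfolding B_def by (simp add: pos_divide_le_eq mult.commute)
    define u where "u = sqrt c * s / a1"
    define v where "v = sqrt c * s / a2"
    have "max N1 0 * a1 \<le> sqrt c * s" using Bs by simp
    hence uN: "max N1 0 \<le> u" unfolding u_def by (simp only: pos_le_divide_eq[OF a1p])
    have "max N2 0 * a2 \<le> sqrt c * s" using Bs by simp
    hence vN: "max N2 0 \<le> v" unfolding v_def by (simp only: pos_le_divide_eq[OF a2p])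
    have u0: "u \<ge> 0" and v0: "v \<ge> 0" and uN1: "u \<ge> N1" and vN2: "v \<ge> N2" using uN vN by auto
    have au: "a1 * u = sqrt c * s" unfolding u_def using a1p by simp
    have av: "a2 * v = sqrt c * s" unfolding v_def using a2p by simp
    have "(a1 * u) * (a2 * v) = c * z"
    proof -
      have "(a1 * u) * (a2 * v) = (sqrt c * sqrt c) * (s * s)" unfolding au av by (simp add: algebra_simps)
      also have "\<dots> = c * z" using cpos z0 by (simp add: s_def)
      finally show ?thesis .
    qed
    moreover have "(a1 * u) * (a2 * v) = (a1 * a2) * (u * v)" by (simp add: algebra_simps)
    ultimately have "c * (u * v) = c * z" using a12 by simp
    hence uv: "u * v = z" using cpos by simp
    have "prob ((\<lambda>x. (U x, V x)) -` ({u<..} \<times> {v<..}) \<inter> space M) =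
      prob (U -` {u<..} \<inter> space M) * prob (V -` {v<..} \<inter> space M)"
      by (rule indep_varD[OF ind]) auto
    also have "U -` {u<..} \<inter> space M = {\<omega> \<in> space M. u < U \<omega>}" by auto
    also have "V -` {v<..} \<inter> space M = {\<omega> \<in> space M. v < V \<omega>}" by auto
    finally have eq: "prob ((\<lambda>x. (U x, V x)) -` ({u<..} \<times> {v<..}) \<inter> space M) =
      prob {\<omega> \<in> space M. u < U \<omega>} * prob {\<omega> \<in> space M. v < V \<omega>}" .
    have sub: "(\<lambda>x. (U x, V x)) -` ({u<..} \<times> {v<..}) \<inter> space M \<subseteq> {\<omega> \<in> space M. z < U \<omega> * V \<omega>}"
    proof
      fix \<omega> assume "\<omega> \<in> (\<lambda>x. (U x, V x)) -` ({u<..} \<times> {v<..}) \<inter> space M"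
      hence h: "u < U \<omega>" "v < V \<omega>" "\<omega> \<in> space M" by auto
      have "u * v \<le> u * V \<omega>" using h u0 by (intro mult_left_mono) auto
      also have "\<dots> < U \<omega> * V \<omega>" using h v0 by (intro mult_strict_right_mono) auto
      finally show "\<omega> \<in> {\<omega> \<in> space M. z < U \<omega> * V \<omega>}" using uv h by simp
    qed
    have "exp (- 2 * sqrt c * sqrt z) = exp (- a1 * u) * exp (- a2 * v)"
      unfolding exp_add[symmetric] using au av by (simp add: s_def algebra_simps)
    also have "\<dots> \<le> prob {\<omega> \<in> space M. u < U \<omega>} * prob {\<omega> \<in> space M. v < V \<omega>}"
      using N1[OF uN1] N2[OF vN2] by (intro mult_mono) auto
    also have "\<dots> = prob ((\<lambda>x. (U x, V x)) -` ({u<..} \<times> {v<..}) \<inter> space M)" using eq by simp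
    also have "\<dots> \<le> measure M {\<omega> \<in> space M. z < U \<omega> * V \<omega>}"
      by (rule finite_measure_mono[OF sub]) measurable
    finally show "exp (- 2 * sqrt c * sqrt z) \<le> measure M {\<omega> \<in> space M. z < U \<omega> * V \<omega>}" .
  qed
qed

end


lemma amgm_sqrt: "(p::real) \<ge> 0 \<Longrightarrow> q \<ge> 0 \<Longrightarrow> 2 * sqrt (p * q) \<le> p + q"
proof -
  assume p: "p \<ge> 0" and q: "q \<ge> 0"
  have "0 \<le> (sqrt p - sqrt q)\<^sup>2" by simp
  also have "\<dots> = p + q - 2 * (sqrt p * sqrt q)" using p q by (simp add: power2_eq_square algebra_simps)
  finally show ?thesis by (simp add: real_sqrt_mult)
qed

context prob_space
begin

lemma prod_tail_upper:
  fixes U V :: "'a \<Rightarrow> real"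
  assumes ind: "indep_var borel U borel V" and nU: "nice M U l1" and nV: "nice M V l2"
    and c: "0 < c" "c < l1 * l2"
  shows "\<exists>C. \<forall>z\<ge>0. measure M {\<omega> \<in> space M. 0 < U \<omega> \<and> 0 < V \<omega> \<and> z < U \<omega> * V \<omega>} \<le> C * exp (- 2 * sqrt c * sqrt z)"
proof -
  have [measurable]: "U \<in> borel_measurable M" using indep_var_rv1[OF ind] by simp
  have [measurable]: "V \<in> borel_measurable M" using indep_var_rv2[OF ind] by simp
  have l1: "l1 > 0" using niceD(1)[OF nU] .
  have l2: "l2 > 0" using niceD(1)[OF nV] .
  have l12: "l1 * l2 > 0" using l1 l2 by simp
  define t where "t = sqrt (c / (l1 * l2))"
  have "c / (l1 * l2) < 1" "0 < c / (l1 * l2)" using c l12 by auto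
  hence t1: "t < 1" "t > 0" unfolding t_def by (auto simp: real_sqrt_less_iff)
  have tt: "t * t = c / (l1 * l2)"
  proof -
    have "t * t = \<bar>c / (l1 * l2)\<bar>" unfolding t_def by (rule real_sqrt_mult_self)
    thus ?thesis using c l12 by simp
  qed
  define a1 where "a1 = l1 * t"
  define a2 where "a2 = l2 * t"
  have a1: "a1 < l1" "a1 > 0" using l1 t1 by (auto simp: a1_def)
  have a2: "a2 < l2" "a2 > 0" using l2 t1 by (auto simp: a2_def)
  have a12: "a1 * a2 = c"
  proof -
    have "a1 * a2 = (l1 * l2) * (t * t)" by (simp add: a1_def a2_def algebra_simps)
    also have "\<dots> = c" using tt l1 l2 by simp
    finally show ?thesis .
  qed
  define I1 where "I1 = (\<integral>\<^sup>+\<omega>. ennreal (exp (a1 * max (U \<omega>) 0)) \<partial>M)"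
  define I2 where "I2 = (\<integral>\<^sup>+\<omega>. ennreal (exp (a2 * max (V \<omega>) 0)) \<partial>M)"
  have I1: "I1 \<noteq> \<infinity>" unfolding I1_def using niceD(2)[OF nU a1(2) a1(1)] .
  have I2: "I2 \<noteq> \<infinity>" unfolding I2_def using niceD(2)[OF nV a2(2) a2(1)] .
  define C where "C = enn2real I1 * enn2real I2"
  have IC: "I1 * I2 = ennreal C"
  proof -
    have "ennreal C = ennreal (enn2real I1) * ennreal (enn2real I2)" unfolding C_def by (simp add: ennreal_mult)
    also have "\<dots> = I1 * I2" using I1 I2 by (simp add: ennreal_enn2real_if)
    finally show ?thesis by simp
  qed
  have prodI: "(\<integral>\<^sup>+\<omega>. ennreal (exp (a1 * max (U \<omega>) 0)) * ennreal (exp (a2 * max (V \<omega>) 0)) \<partial>M) = I1 * I2"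
    unfolding I1_def I2_def
    by (rule indep_nn_prod[of U V "\<lambda>u. exp (a1 * max u 0)" "\<lambda>u. exp (a2 * max u 0)", OF ind]) measurable
  show ?thesis
  proof (intro exI allI impI)
    fix z :: real assume z0: "0 \<le> z"
    define K where "K = 2 * sqrt c * sqrt z"
    define E where "E = {\<omega> \<in> space M. 0 < U \<omega> \<and> 0 < V \<omega> \<and> z < U \<omega> * V \<omega>}"
    have Em[measurable]: "E \<in> sets M" unfolding E_def by measurable
    have pt: "indicator E \<omega> \<le> ennreal (exp (- K)) * (ennreal (exp (a1 * max (U \<omega>) 0)) * ennreal (exp (a2 * max (V \<omega>) 0)))" for \<omega>
    proof (cases "\<omega> \<in> E")
      case True
      hence h: "0 < U \<omega>" "0 < V \<omega>" "z < U \<omega> * V \<omega>" by (auto simp: E_def)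
      have "sqrt z \<le> sqrt (U \<omega> * V \<omega>)" using h by simp
      hence "K \<le> 2 * sqrt c * sqrt (U \<omega> * V \<omega>)" unfolding K_def using c by (simp add: mult_left_mono)
      also have "\<dots> = 2 * sqrt ((a1 * U \<omega>) * (a2 * V \<omega>))"
        using a12 by (simp add: real_sqrt_mult[symmetric] algebra_simps)
      also have "\<dots> \<le> a1 * U \<omega> + a2 * V \<omega>" using h a1 a2 by (intro amgm_sqrt) auto
      finally have "0 \<le> - K + (a1 * max (U \<omega>) 0 + a2 * max (V \<omega>) 0)" using h by simp
      hence "1 \<le> exp (- K + (a1 * max (U \<omega>) 0 + a2 * max (V \<omega>) 0))" by simp
      also have "\<dots> = exp (- K) * (exp (a1 * max (U \<omega>) 0) * exp (a2 * max (V \<omega>) 0))"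
        by (simp only: exp_add)
      finally have "ennreal 1 \<le> ennreal (exp (- K) * (exp (a1 * max (U \<omega>) 0) * exp (a2 * max (V \<omega>) 0)))"
        by (rule ennreal_leI)
      thus ?thesis using True by (simp add: ennreal_mult)
    qed simp
    have "emeasure M E = (\<integral>\<^sup>+\<omega>. indicator E \<omega> \<partial>M)" by simp
    also have "\<dots> \<le> (\<integral>\<^sup>+\<omega>. ennreal (exp (- K)) * (ennreal (exp (a1 * max (U \<omega>) 0)) * ennreal (exp (a2 * max (V \<omega>) 0))) \<partial>M)"
      by (rule nn_integral_mono) (rule pt)
    also have "\<dots> = ennreal (exp (- K)) * (I1 * I2)"
      by (subst nn_integral_cmult) (simp_all add: prodI)
    also have "\<dots> = ennreal (C * exp (- K))"
    proof -
      have "C \<ge> 0" by (simp add: C_def)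
      thus ?thesis using IC by (simp add: ennreal_mult mult.commute)
    qed
    finally have "ennreal (measure M E) \<le> ennreal (C * exp (- K))" by (simp add: emeasure_eq_measure)
    moreover have "C \<ge> 0" by (simp add: C_def)
    ultimately have "measure M E \<le> C * exp (- K)" by simp
    thus "measure M {\<omega> \<in> space M. 0 < U \<omega> \<and> 0 < V \<omega> \<and> z < U \<omega> * V \<omega>} \<le> C * exp (- 2 * sqrt c * sqrt z)"
      by (simp add: E_def K_def)
  qed
qed

end


context prob_space
begin

lemma nice_neg_indep:
  fixes U V :: "'a \<Rightarrow> real"
  assumes ind: "indep_var borel U borel V"
  shows "indep_var borel (\<lambda>\<omega>. - U \<omega>) borel (\<lambda>\<omega>. - V \<omega>)"
  using indep_var_compose[OF ind, of uminus borel uminus borel] by (simp add: o_def)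

lemma prod_main:
  fixes U V :: "'a \<Rightarrow> real"
  assumes DU: "distributed M lborel U fU" and DV: "distributed M lborel V fV"
    and ind: "indep_var borel U borel V"
    and nU: "nice M U l1" and nU': "nice M (\<lambda>\<omega>. - U \<omega>) k1"
    and nV: "nice M V l2" and nV': "nice M (\<lambda>\<omega>. - V \<omega>) k2"
  shows "(\<forall>\<^sub>F p in at_left 1. \<exists>!z. measure M {\<omega> \<in> space M. U \<omega> * V \<omega> \<le> z} = p) \<and>
         quantile (\<lambda>z. measure M {\<omega> \<in> space M. U \<omega> * V \<omega> \<le> z}) \<sim>[at_left 1]
           (\<lambda>p. (ln (1 - p))\<^sup>2 / (4 * min (l1 * l2) (k1 * k2)))"
proof -
  define F where "F z = measure M {\<omega> \<in> space M. U \<omega> * V \<omega> \<le> z}" for z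
  define G where "G z = measure M {\<omega> \<in> space M. z < U \<omega> * V \<omega>}" for z
  define \<xi> where "\<xi> = min (l1 * l2) (k1 * k2)"
  have [measurable]: "U \<in> borel_measurable M" using indep_var_rv1[OF ind] by simp
  have [measurable]: "V \<in> borel_measurable M" using indep_var_rv2[OF ind] by simp
  have ind': "indep_var borel (\<lambda>\<omega>. - U \<omega>) borel (\<lambda>\<omega>. - V \<omega>)" by (rule nice_neg_indep[OF ind])
  have \<xi>: "\<xi> > 0" using niceD(1)[OF nU] niceD(1)[OF nU'] niceD(1)[OF nV] niceD(1)[OF nV']
    by (simp add: \<xi>_def)
  have FG: "1 - F z = G z" for z
  proof -
    have "space M - {\<omega> \<in> space M. U \<omega> * V \<omega> \<le> z} = {\<omega> \<in> space M. z < U \<omega> * V \<omega>}" by auto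
    moreover have "prob (space M - {\<omega> \<in> space M. U \<omega> * V \<omega> \<le> z}) = 1 - F z"
      unfolding F_def by (rule prob_compl) measurable
    ultimately show ?thesis by (simp add: G_def)
  qed
  define N where "N = distr M borel (\<lambda>\<omega>. U \<omega> * V \<omega>)"
  interpret N: real_distribution N unfolding N_def by (intro real_distribution_distr) measurable
  have cdfF: "cdf N = F"
  proof
    fix z
    have "cdf N z = measure N {..z}" by (simp add: cdf_def)
    also have "\<dots> = measure M ((\<lambda>\<omega>. U \<omega> * V \<omega>) -` {..z} \<inter> space M)"
      unfolding N_def by (rule measure_distr) auto
    also have "(\<lambda>\<omega>. U \<omega> * V \<omega>) -` {..z} \<inter> space M = {\<omega> \<in> space M. U \<omega> * V \<omega> \<le> z}" by auto
    finally show "cdf N z = F z" by (simp add: F_def)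
  qed
  have cont: "isCont F z" for z
  proof -
    have "measure N {z} = measure M ((\<lambda>\<omega>. U \<omega> * V \<omega>) -` {z} \<inter> space M)"
      unfolding N_def by (rule measure_distr) auto
    also have "(\<lambda>\<omega>. U \<omega> * V \<omega>) -` {z} \<inter> space M = {\<omega> \<in> space M. U \<omega> * V \<omega> = z}" by auto
    also have "measure M \<dots> = 0" by (rule prod_level_null[OF DU DV ind])
    finally have "measure N {z} = 0" .
    hence "isCont (cdf N) z" by (simp add: N.isCont_cdf)
    thus ?thesis by (simp add: cdfF)
  qed
  have mono: "mono F" unfolding cdfF[symmetric] by (intro monoI N.cdf_nondecreasing)
  have lim1: "(F \<longlongrightarrow> 1) at_top" unfolding cdfF[symmetric] by (rule N.cdf_lim_at_top_prob)
  have le1: "F z \<le> 1" for z unfolding F_def by simp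
  have strict: "F z < F w" if zw: "0 < z" "z < w" for z w
  proof -
    have "F w = F z + measure M {\<omega> \<in> space M. z < U \<omega> * V \<omega> \<and> U \<omega> * V \<omega> \<le> w}"
    proof -
      have "{\<omega> \<in> space M. U \<omega> * V \<omega> \<le> w} = {\<omega> \<in> space M. U \<omega> * V \<omega> \<le> z} \<union> {\<omega> \<in> space M. z < U \<omega> * V \<omega> \<and> U \<omega> * V \<omega> \<le> w}"
        using zw by auto
      hence "F w = measure M ({\<omega> \<in> space M. U \<omega> * V \<omega> \<le> z} \<union> {\<omega> \<in> space M. z < U \<omega> * V \<omega> \<and> U \<omega> * V \<omega> \<le> w})"
        by (simp add: F_def)
      also have "\<dots> = F z + measure M {\<omega> \<in> space M. z < U \<omega> * V \<omega> \<and> U \<omega> * V \<omega> \<le> w}"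
        unfolding F_def by (rule finite_measure_Union) auto
      finally show ?thesis .
    qed
    moreover have "0 < measure M {\<omega> \<in> space M. z < U \<omega> * V \<omega> \<and> U \<omega> * V \<omega> \<le> w}"
      by (rule prod_pos[OF ind nU nV zw])
    ultimately show ?thesis by simp
  qed
  have negprod: "(- U \<omega>) * (- V \<omega>) = U \<omega> * V \<omega>" for \<omega> by simp
  have lo: "\<exists>Z. \<forall>z\<ge>Z. exp (- 2 * sqrt c * sqrt z) \<le> G z" if c: "c > \<xi>" for c
  proof (cases "c > l1 * l2")
    case True
    then show ?thesis using prod_tail_lower[OF ind nU nV True] by (simp add: G_def)
  next
    case False
    hence "c > k1 * k2" using c by (simp add: \<xi>_def)
    then show ?thesis using prod_tail_lower[OF ind' nU' nV'] by (simp add: G_def)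
  qed
  have up: "\<exists>C. \<forall>z\<ge>0. G z \<le> C * exp (- 2 * sqrt c * sqrt z)" if c: "0 < c" "c < \<xi>" for c
  proof -
    obtain C1 where C1: "\<And>z. z \<ge> 0 \<Longrightarrow> measure M {\<omega> \<in> space M. 0 < U \<omega> \<and> 0 < V \<omega> \<and> z < U \<omega> * V \<omega>} \<le> C1 * exp (- 2 * sqrt c * sqrt z)"
      using prod_tail_upper[OF ind nU nV c(1)] c by (auto simp: \<xi>_def)
    obtain C2 where C2: "\<And>z. z \<ge> 0 \<Longrightarrow> measure M {\<omega> \<in> space M. 0 < - U \<omega> \<and> 0 < - V \<omega> \<and> z < (- U \<omega>) * (- V \<omega>)} \<le> C2 * exp (- 2 * sqrt c * sqrt z)"
      using prod_tail_upper[OF ind' nU' nV' c(1)] c by (auto simp: \<xi>_def)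
    show ?thesis
    proof (intro exI allI impI)
      fix z :: real assume z: "0 \<le> z"
      have "{\<omega> \<in> space M. z < U \<omega> * V \<omega>} = {\<omega> \<in> space M. 0 < U \<omega> \<and> 0 < V \<omega> \<and> z < U \<omega> * V \<omega>} \<union> {\<omega> \<in> space M. 0 < - U \<omega> \<and> 0 < - V \<omega> \<and> z < (- U \<omega>) * (- V \<omega>)}"
      proof (rule set_eqI)
        fix \<omega>
        have sg: "(0 < U \<omega> \<and> 0 < V \<omega>) \<or> (U \<omega> < 0 \<and> V \<omega> < 0)" if "z < U \<omega> * V \<omega>"
        proof -
          have "0 < U \<omega> * V \<omega>" using z that by linarith
          thus ?thesis by (simp add: zero_less_mult_iff)
        qed
        show "\<omega> \<in> {\<omega> \<in> space M. z < U \<omega> * V \<omega>} \<longleftrightarrow> \<omega> \<in> {\<omega> \<in> space M. 0 < U \<omega> \<and> 0 < V \<omega> \<and> z < U \<omega> * V \<omega>} \<union> {\<omega> \<in> space M. 0 < - U \<omega> \<and> 0 < - V \<omega> \<and> z < (- U \<omega>) * (- V \<omega>)}"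
          using sg by auto
      qed
      hence "G z = measure M {\<omega> \<in> space M. 0 < U \<omega> \<and> 0 < V \<omega> \<and> z < U \<omega> * V \<omega>} + measure M {\<omega> \<in> space M. 0 < - U \<omega> \<and> 0 < - V \<omega> \<and> z < (- U \<omega>) * (- V \<omega>)}"
        unfolding G_def by (simp only:) (rule finite_measure_Union, auto)
      also have "\<dots> \<le> C1 * exp (- 2 * sqrt c * sqrt z) + C2 * exp (- 2 * sqrt c * sqrt z)"
        using C1[OF z] C2[OF z] by linarith
      also have "\<dots> = (C1 + C2) * exp (- 2 * sqrt c * sqrt z)" by (simp add: algebra_simps)
      finally show "G z \<le> (C1 + C2) * exp (- 2 * sqrt c * sqrt z)" .
    qed
  qed
  have tailG: "((\<lambda>z. ln (G z) / sqrt z) \<longlongrightarrow> - 2 * sqrt \<xi>) at_top"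
    by (rule tail_lim[OF \<xi> lo up])
  have tail: "((\<lambda>z. ln (1 - F z) / sqrt z) \<longlongrightarrow> - 2 * sqrt \<xi>) at_top"
    using tailG by (simp add: FG)
  have "(\<forall>\<^sub>F p in at_left 1. \<exists>!z. F z = p) \<and> quantile F \<sim>[at_left 1] (\<lambda>p. (ln (1 - p))\<^sup>2 / (4 * \<xi>))"
    by (rule quantile_asymp[OF cont mono lim1 le1 strict \<xi> tail])
  thus ?thesis unfolding F_def \<xi>_def by simp
qed

end


theorem mainTheorem11:
  fixes M :: "'a measure" and X Y :: "'a \<Rightarrow> real"
    and m n \<alpha>\<^sub>1 \<alpha>\<^sub>2 \<beta>\<^sub>1 \<beta>\<^sub>2 :: real
  assumes "prob_space M"
    and "m > -1/2" "n > -1/2" "\<alpha>\<^sub>1 > 0" "\<alpha>\<^sub>2 > 0"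
    and "\<bar>\<beta>\<^sub>1\<bar> < \<alpha>\<^sub>1" "\<bar>\<beta>\<^sub>2\<bar> < \<alpha>\<^sub>2"
    and "distributed M lborel X (\<lambda>x. ennreal (vg_pdf m \<alpha>\<^sub>1 \<beta>\<^sub>1 x))"
    and "distributed M lborel Y (\<lambda>y. ennreal (vg_pdf n \<alpha>\<^sub>2 \<beta>\<^sub>2 y))"
    and "prob_space.indep_var M borel X borel Y"
  defines "Q \<equiv> quantile (\<lambda>z. measure M {\<omega> \<in> space M. X \<omega> * Y \<omega> \<le> z})"
    and "\<xi>\<^sub>1 \<equiv> min ((\<alpha>\<^sub>1 - \<beta>\<^sub>1) * (\<alpha>\<^sub>2 - \<beta>\<^sub>2)) ((\<alpha>\<^sub>1 + \<beta>\<^sub>1) * (\<alpha>\<^sub>2 + \<beta>\<^sub>2))"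
    and "\<xi>\<^sub>2 \<equiv> min ((\<alpha>\<^sub>1 - \<beta>\<^sub>1) * (\<alpha>\<^sub>2 + \<beta>\<^sub>2)) ((\<alpha>\<^sub>1 + \<beta>\<^sub>1) * (\<alpha>\<^sub>2 - \<beta>\<^sub>2))"
  shows "Q \<sim>[at_left 1] (\<lambda>p. (ln (1 - p))\<^sup>2 / (4 * \<xi>\<^sub>1)) \<and>
         Q \<sim>[at_right 0] (\<lambda>p. - (ln p)\<^sup>2 / (4 * \<xi>\<^sub>2))"
proof -
  interpret prob_space M by (rule assms(1))
  note DX = assms(8) and DY = assms(9) and ind = assms(10)
  have [measurable]: "X \<in> borel_measurable M" using indep_var_rv1[OF ind] by simp
  have [measurable]: "Y \<in> borel_measurable M" using indep_var_rv2[OF ind] by simp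
  have nX: "nice M X (\<alpha>\<^sub>1 - \<beta>\<^sub>1)" by (rule vg_nice[OF DX assms(2) assms(4) assms(6)])
  have nX': "nice M (\<lambda>\<omega>. - X \<omega>) (\<alpha>\<^sub>1 + \<beta>\<^sub>1)"
  proof -
    have "\<bar>- \<beta>\<^sub>1\<bar> < \<alpha>\<^sub>1" using assms(6) by simp
    from vg_nice[OF vg_neg[OF DX] assms(2) assms(4) this]
    show ?thesis by (simp only: diff_minus_eq_add)
  qed
  have nY: "nice M Y (\<alpha>\<^sub>2 - \<beta>\<^sub>2)" by (rule vg_nice[OF DY assms(3) assms(5) assms(7)])
  have nY': "nice M (\<lambda>\<omega>. - Y \<omega>) (\<alpha>\<^sub>2 + \<beta>\<^sub>2)"
  proof -
    have "\<bar>- \<beta>\<^sub>2\<bar> < \<alpha>\<^sub>2" using assms(7) by simp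
    from vg_nice[OF vg_neg[OF DY] assms(3) assms(5) this]
    show ?thesis by (simp only: diff_minus_eq_add)
  qed
  have part1: "Q \<sim>[at_left 1] (\<lambda>p. (ln (1 - p))\<^sup>2 / (4 * \<xi>\<^sub>1))"
    using prod_main[OF DX DY ind nX nX' nY nY'] unfolding Q_def \<xi>\<^sub>1_def by blast
  define F where "F z = measure M {\<omega> \<in> space M. X \<omega> * Y \<omega> \<le> z}" for z
  define F' where "F' z = measure M {\<omega> \<in> space M. X \<omega> * - Y \<omega> \<le> z}" for z
  have DY' : "distributed M lborel (\<lambda>\<omega>. - Y \<omega>) (\<lambda>x. ennreal (vg_pdf n \<alpha>\<^sub>2 (- \<beta>\<^sub>2) x))"
    by (rule vg_neg[OF DY])
  have ind2: "indep_var borel X borel (\<lambda>\<omega>. - Y \<omega>)"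
    using indep_var_compose[OF ind, of "\<lambda>x. x" borel uminus borel] by (simp add: o_def)
  have nY'': "nice M (\<lambda>\<omega>. - (- Y \<omega>)) (\<alpha>\<^sub>2 - \<beta>\<^sub>2)" using nY by simp
  have P2: "(\<forall>\<^sub>F q in at_left 1. \<exists>!w. F' w = q) \<and>
      quantile F' \<sim>[at_left 1] (\<lambda>q. (ln (1 - q))\<^sup>2 / (4 * \<xi>\<^sub>2))"
  proof -
    have Fe: "F' = (\<lambda>z. measure M {\<omega> \<in> space M. X \<omega> * - Y \<omega> \<le> z})" by (rule ext) (simp add: F'_def)
    show ?thesis using prod_main[OF DX DY' ind2 nX nX' nY' nY''] unfolding Fe \<xi>\<^sub>2_def .
  qed
  have FF': "F z = 1 - F' (- z)" for z
  proof -
    have "F' (- z) = measure M {\<omega> \<in> space M. z \<le> X \<omega> * Y \<omega>}" unfolding F'_def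
      by (rule arg_cong[where f = "measure M"]) auto
    also have "{\<omega> \<in> space M. z \<le> X \<omega> * Y \<omega>} = {\<omega> \<in> space M. z < X \<omega> * Y \<omega>} \<union> {\<omega> \<in> space M. X \<omega> * Y \<omega> = z}"
      by auto
    also have "measure M \<dots> = measure M {\<omega> \<in> space M. z < X \<omega> * Y \<omega>} + measure M {\<omega> \<in> space M. X \<omega> * Y \<omega> = z}"
      by (rule finite_measure_Union) auto
    also have "measure M {\<omega> \<in> space M. X \<omega> * Y \<omega> = z} = 0" by (rule prod_level_null[OF DX DY ind])
    also have "{\<omega> \<in> space M. z < X \<omega> * Y \<omega>} = space M - {\<omega> \<in> space M. X \<omega> * Y \<omega> \<le> z}" by auto
    also have "measure M \<dots> = 1 - F z" unfolding F_def by (rule prob_compl) measurable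
    finally show ?thesis by simp
  qed
  have h: "filterlim (\<lambda>p. 1 - p) (at_left 1) (at_right (0::real))"
  proof (rule tendsto_imp_filterlim_at_left)
    show "((\<lambda>p. 1 - p) \<longlongrightarrow> (1::real)) (at_right 0)"
      by (rule tendsto_eq_intros tendsto_ident_at tendsto_const | simp)+
    show "\<forall>\<^sub>F p in at_right 0. 1 - p < (1::real)"
      using eventually_at_right_real[of 0 1] by (rule eventually_mono) auto
  qed
  have evP: "\<forall>\<^sub>F p in at_right 0. \<exists>!w. F' w = 1 - p"
    using filterlim_iff[THEN iffD1, OF h, rule_format, OF conjunct1[OF P2]] .
  have Qeq: "\<forall>\<^sub>F p in at_right 0. Q p = - quantile F' (1 - p)"
  proof (rule eventually_mono[OF evP])
    fix p assume u: "\<exists>!w. F' w = 1 - p"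
    define w0 where "w0 = quantile F' (1 - p)"
    have w0: "F' w0 = 1 - p" unfolding w0_def quantile_def by (rule theI'[OF u])
    have ex: "\<exists>!z. F z = p"
    proof (rule ex1I[of _ "- w0"])
      show "F (- w0) = p" using w0 by (simp add: FF')
      fix z assume "F z = p"
      hence "F' (- z) = 1 - p" by (simp add: FF')
      hence "- z = w0" using u w0 by blast
      thus "z = - w0" by simp
    qed
    have "Q p = (THE z. F z = p)" unfolding Q_def quantile_def F_def ..
    also have "\<dots> = - w0" by (rule the1_equality[OF ex]) (use w0 in \<open>simp add: FF'\<close>)
    finally show "Q p = - quantile F' (1 - p)" by (simp add: w0_def)
  qed
  have "(\<lambda>p. quantile F' (1 - p)) \<sim>[at_right 0] (\<lambda>p. (ln (1 - (1 - p)))\<^sup>2 / (4 * \<xi>\<^sub>2))"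
    by (rule asymp_equiv_compose'[OF conjunct2[OF P2] h])
  hence "(\<lambda>p. - quantile F' (1 - p)) \<sim>[at_right 0] (\<lambda>p. - ((ln p)\<^sup>2 / (4 * \<xi>\<^sub>2)))"
    by (intro asymp_equiv_uminus) simp
  moreover have e1: "\<forall>\<^sub>F p in at_right 0. - quantile F' (1 - p) = Q p"
    using Qeq by (rule eventually_mono) simp
  moreover have e2: "\<forall>\<^sub>F p in at_right 0. - ((ln p)\<^sup>2 / (4 * \<xi>\<^sub>2)) = - (ln p)\<^sup>2 / (4 * \<xi>\<^sub>2)"
    by (rule always_eventually) (rule allI, rule minus_divide_left)
  ultimately have part2: "Q \<sim>[at_right 0] (\<lambda>p. - (ln p)\<^sup>2 / (4 * \<xi>\<^sub>2))"
    using asymp_equiv_cong[OF e1 e2] by blast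
  show ?thesis using part1 part2 by blast
qed


end
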